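(* Let $D$ be a finite set with $|D|\geq 2$, let $P:D^2\to\{0,1\}$ be a binary predicate, and let $0<\varepsilon<1$. (1) If there exist two-element subsets $B,C\subseteq D$ (not necessarily disjoint) such that the restriction $P|_{B\times C}$ is a singleton, then there exists an instance $I$ of $\mathrm{CSP}(P)$ such that every $\varepsilon$-sparsifier of $I$ has $\Omega(n^2)$ constraints, where $n$ is the number of variables of $I$ (i.e., there is a constant $c>0$ such that for infinitely many $n$ there is an instance on $n$ variables all of whose $\varepsilon$-sparsifiers have at least $cn^2$ constraints). (2) Otherwise (i.e., if $P|_{B\times C}$ is not a singleton for any two-element subsets $B,C\subseteq D$), for every instance $I$ of $\mathrm{CSP}(P)$ on $n$ variables there exists an $\varepsilon$-sparsifier of $I$ with $O(\varepsilon^{-2}n)$ constraints, where the implied constant does not depend on $I$, $n$ or $\varepsilon$.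
   Context: A binary CSP instance is $I=(V,D,\Pi,w)$ where $V$ is a finite set of $n=|V|$ variables, $D$ a finite domain, $\Pi$ a set of constraints, each a pair $\langle (u,v),P\rangle$ with $u,v\in V$ distinct and $P:D^2\to\{0,1\}$, and $w:\Pi\to\mathbb{R}_{>0}$ positive weights. $\mathrm{CSP}(P)$ is the class of instances in which every constraint uses the predicate $P$. For an assignment $A:V\to D$, $\mathrm{Val}_I(A)=\sum_{\pi=\langle(u,v),P\rangle\in\Pi} w(\pi)P(A(u),A(v))$. For $0<\varepsilon<1$, an $\varepsilon$-sparsifier of $I$ is an instance $I_\varepsilon=(V,D,\Pi_\varepsilon,w_\varepsilon)$ with $\Pi_\varepsilon\subseteq\Pi$ and $w_\varepsilon:\Pi_\varepsilon\to\mathbb{R}_{>0}$ such that for every $A:V\to D$, $(1-\varepsilon)\mathrm{Val}_I(A)\le \mathrm{Val}_{I_\varepsilon}(A)\le(1+\varepsilon)\mathrm{Val}_I(A)$; its number of constraints is $|\Pi_\varepsilon|$. A predicate is a singleton if exactly one tuple is mapped to $1$. For $B,C\subseteq D$, $P|_{B\times C}$ denotes the restriction of $P$ to $B\times C$. *)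

theory Defs
  imports Complex_Main
begin

text \<open>A binary CSP(P) instance on variable set V: since all constraints use the same
predicate P, a constraint is determined by its ordered scope (u,v) with u, v distinct
variables.\<close>

definition csp_instance :: "'v set \<Rightarrow> ('v \<times> 'v) set \<Rightarrow> ('v \<times> 'v \<Rightarrow> real) \<Rightarrow> bool" where
  "csp_instance V E w \<longleftrightarrow> finite V \<and> E \<subseteq> {(u, v). u \<in> V \<and> v \<in> V \<and> u \<noteq> v}
     \<and> (\<forall>e\<in>E. w e > 0)"

definition csp_val :: "('d \<Rightarrow> 'd \<Rightarrow> bool) \<Rightarrow> ('v \<times> 'v) set \<Rightarrow> ('v \<times> 'v \<Rightarrow> real)
    \<Rightarrow> ('v \<Rightarrow> 'd) \<Rightarrow> real" where
  "csp_val P E w A = (\<Sum>e\<in>E. w e * (if P (A (fst e)) (A (snd e)) then 1 else 0))"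

definition is_sparsifier :: "('d \<Rightarrow> 'd \<Rightarrow> bool) \<Rightarrow> real \<Rightarrow> ('v \<times> 'v) set \<Rightarrow> ('v \<times> 'v \<Rightarrow> real)
    \<Rightarrow> ('v \<times> 'v) set \<Rightarrow> ('v \<times> 'v \<Rightarrow> real) \<Rightarrow> bool" where
  "is_sparsifier P eps E w E' w' \<longleftrightarrow> E' \<subseteq> E \<and> (\<forall>e\<in>E'. w' e > 0) \<and>
     (\<forall>A :: 'v \<Rightarrow> 'd. (1 - eps) * csp_val P E w A \<le> csp_val P E' w' A
                   \<and> csp_val P E' w' A \<le> (1 + eps) * csp_val P E w A)"

definition singleton_restr :: "('d \<Rightarrow> 'd \<Rightarrow> bool) \<Rightarrow> 'd set \<Rightarrow> 'd set \<Rightarrow> bool" where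
  "singleton_restr P B C \<longleftrightarrow> card {(b, c). b \<in> B \<and> c \<in> C \<and> P b c} = 1"

end

theory Submission
  imports Defs "Jordan_Normal_Form.Determinant"
begin

type_synonym rmat = "nat \<Rightarrow> nat \<Rightarrow> real"
type_synonym rvec = "nat \<Rightarrow> real"

definition msk :: "nat \<Rightarrow> rmat \<Rightarrow> bool" where
  "msk m A \<longleftrightarrow> (\<forall>i j. (m \<le> i \<or> m \<le> j) \<longrightarrow> A i j = 0)"
definition mm :: "nat \<Rightarrow> rmat \<Rightarrow> rmat \<Rightarrow> rmat" where
  "mm m A B = (\<lambda>i j. if i < m \<and> j < m then (\<Sum>k<m. A i k * B k j) else 0)"
definition idm :: "nat \<Rightarrow> rmat" where
  "idm m = (\<lambda>i j. if i < m \<and> i = j then 1 else 0)"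
definition outer :: "nat \<Rightarrow> rvec \<Rightarrow> rmat" where
  "outer m v = (\<lambda>i j. if i < m \<and> j < m then v i * v j else 0)"
definition mv :: "nat \<Rightarrow> rmat \<Rightarrow> rvec \<Rightarrow> rvec" where
  "mv m A x = (\<lambda>i. if i < m then (\<Sum>j<m. A i j * x j) else 0)"
definition dot :: "nat \<Rightarrow> rvec \<Rightarrow> rvec \<Rightarrow> real" where
  "dot m x y = (\<Sum>i<m. x i * y i)"
definition qf :: "nat \<Rightarrow> rmat \<Rightarrow> rvec \<Rightarrow> real" where
  "qf m A x = dot m x (mv m A x)"
definition tr :: "nat \<Rightarrow> rmat \<Rightarrow> real" where
  "tr m A = (\<Sum>i<m. A i i)"
definition symm :: "rmat \<Rightarrow> bool" where
  "symm A \<longleftrightarrow> (\<forall>i j. A i j = A j i)"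
definition nz :: "nat \<Rightarrow> rvec \<Rightarrow> bool" where
  "nz m x \<longleftrightarrow> (\<exists>i<m. x i \<noteq> 0)"
definition PD :: "nat \<Rightarrow> rmat \<Rightarrow> bool" where
  "PD m A \<longleftrightarrow> (\<forall>x. nz m x \<longrightarrow> 0 < qf m A x)"
definition PSD :: "nat \<Rightarrow> rmat \<Rightarrow> bool" where
  "PSD m A \<longleftrightarrow> (\<forall>x. 0 \<le> qf m A x)"
definition lc :: "real \<Rightarrow> rmat \<Rightarrow> real \<Rightarrow> rmat \<Rightarrow> rmat" where
  "lc a A b B = (\<lambda>i j. a * A i j + b * B i j)"

lemma msk_mm[simp]: "msk m (mm m A B)" by (auto simp: msk_def mm_def)
lemma msk_idm[simp]: "msk m (idm m)" by (auto simp: msk_def idm_def)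
lemma msk_outer[simp]: "msk m (outer m v)" by (auto simp: msk_def outer_def)
lemma msk_lc[simp]: "msk m A \<Longrightarrow> msk m B \<Longrightarrow> msk m (lc a A b B)" by (auto simp: msk_def lc_def)
lemma symm_idm[simp]: "symm (idm m)" by (auto simp: symm_def idm_def)
lemma symm_outer[simp]: "symm (outer m v)" by (auto simp: symm_def outer_def)
lemma symm_lc[simp]: "symm A \<Longrightarrow> symm B \<Longrightarrow> symm (lc a A b B)" by (auto simp: symm_def lc_def)

lemma mm_assoc: "mm m (mm m A B) C = mm m A (mm m B C)"
proof (intro ext)
  fix i j
  show "mm m (mm m A B) C i j = mm m A (mm m B C) i j"
    by (auto simp: mm_def sum_distrib_left sum_distrib_right mult.assoc intro: sum.swap)
qed

lemma sum_delta_l: "i < (m::nat) \<Longrightarrow> (\<Sum>k<m. (if i = k then 1 else 0) * (f k::real)) = f i"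
proof -
  assume "i < m"
  have "(\<Sum>k<m. (if i = k then 1 else 0) * f k) = (\<Sum>k<m. if i = k then f k else 0)"
    by (rule sum.cong) auto
  also have "\<dots> = f i" using \<open>i < m\<close> by (subst sum.delta') auto
  finally show ?thesis .
qed
lemma sum_delta_r: "i < (m::nat) \<Longrightarrow> (\<Sum>k<m. (f k::real) * (if k = i then 1 else 0)) = f i"
proof -
  assume "i < m"
  have "(\<Sum>k<m. f k * (if k = i then 1 else 0)) = (\<Sum>k<m. if k = i then f k else 0)"
    by (rule sum.cong) auto
  also have "\<dots> = f i" using \<open>i < m\<close> by (subst sum.delta) auto
  finally show ?thesis .
qed

lemma mm_idm_left: "msk m A \<Longrightarrow> mm m (idm m) A = A"
proof (intro ext)
  fix i j assume "msk m A"
  show "mm m (idm m) A i j = A i j"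
  proof (cases "i < m \<and> j < m")
    case True
    have "(\<Sum>k<m. idm m i k * A k j) = (\<Sum>k<m. (if i = k then 1 else 0) * A k j)"
      by (rule sum.cong) (auto simp: idm_def True)
    then show ?thesis using True sum_delta_l[of i m "\<lambda>k. A k j"] by (simp add: mm_def)
  next
    case False then show ?thesis using \<open>msk m A\<close> by (auto simp: mm_def msk_def)
  qed
qed
lemma mm_idm_right: "msk m A \<Longrightarrow> mm m A (idm m) = A"
proof (intro ext)
  fix i j assume "msk m A"
  show "mm m A (idm m) i j = A i j"
  proof (cases "i < m \<and> j < m")
    case True
    have "(\<Sum>k<m. A i k * idm m k j) = (\<Sum>k<m. A i k * (if k = j then 1 else 0))"
      by (rule sum.cong) (auto simp: idm_def True)
    then show ?thesis using True sum_delta_r[of j m "\<lambda>k. A i k"] by (simp add: mm_def)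
  next
    case False then show ?thesis using \<open>msk m A\<close> by (auto simp: mm_def msk_def)
  qed
qed

lemma mm_lc_left: "mm m (lc a A b B) C = lc a (mm m A C) b (mm m B C)"
  by (intro ext) (auto simp: mm_def lc_def sum.distrib sum_distrib_left algebra_simps)
lemma mm_lc_right: "mm m C (lc a A b B) = lc a (mm m C A) b (mm m C B)"
  by (intro ext) (auto simp: mm_def lc_def sum.distrib sum_distrib_left algebra_simps)

lemma tr_lc: "tr m (lc a A b B) = a * tr m A + b * tr m B"
  by (simp add: tr_def lc_def sum.distrib sum_distrib_left)

lemma tr_mm_comm: "tr m (mm m A B) = tr m (mm m B A)"
  unfolding tr_def mm_def by (simp add: mult.commute) (rule sum.swap)

lemma mm_symm_transp: "symm A \<Longrightarrow> symm B \<Longrightarrow> mm m B A i j = mm m A B j i"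
  by (auto simp: mm_def symm_def mult.commute)

lemma symm_mm_iff: "symm A \<Longrightarrow> symm B \<Longrightarrow> symm (mm m A B) \<longleftrightarrow> mm m A B = mm m B A"
proof -
  assume sA: "symm A" and sB: "symm B"
  have t: "\<And>i j. mm m A B j i = mm m B A i j" using mm_symm_transp[OF sA sB] by simp
  show ?thesis unfolding symm_def fun_eq_iff t by auto
qed

lemma mv_mm: "mv m (mm m A B) x = mv m A (mv m B x)"
  by (intro ext) (auto simp: mv_def mm_def sum_distrib_left sum_distrib_right mult.assoc intro: sum.swap)

lemma mv_idm: "mv m (idm m) x i = (if i < m then x i else 0)"
proof (cases "i < m")
  case True
  have "(\<Sum>j<m. idm m i j * x j) = (\<Sum>j<m. (if i = j then 1 else 0) * x j)"
    by (rule sum.cong) (auto simp: idm_def True)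
  then show ?thesis using True sum_delta_l[of i m x] by (simp add: mv_def)
qed (simp add: mv_def)

lemma dot_mv_idm[simp]: "dot m y (mv m (idm m) x) = dot m y x"
  by (simp add: dot_def mv_idm)
lemma dot_mv_idm'[simp]: "dot m (mv m (idm m) x) y = dot m x y"
  by (simp add: dot_def mv_idm)

lemma dot_comm: "dot m x y = dot m y x" by (simp add: dot_def mult.commute)

lemma dot_mv_symm: "symm A \<Longrightarrow> dot m x (mv m A y) = dot m (mv m A x) y"
proof -
  assume s: "symm A"
  have "dot m x (mv m A y) = (\<Sum>i<m. \<Sum>j<m. x i * A i j * y j)"
    by (simp add: dot_def mv_def sum_distrib_left mult.assoc)
  also have "\<dots> = (\<Sum>j<m. \<Sum>i<m. x i * A i j * y j)" by (rule sum.swap)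
  also have "\<dots> = (\<Sum>j<m. (\<Sum>i<m. A j i * x i) * y j)"
  proof (rule sum.cong[OF refl])
    fix j
    have "\<And>i. x i * A i j * y j = A j i * x i * y j"
    proof -
      fix i
      have a: "A i j = A j i" using s unfolding symm_def by blast
      show "x i * A i j * y j = A j i * x i * y j" by (simp add: a mult_ac)
    qed
    then show "(\<Sum>i<m. x i * A i j * y j) = (\<Sum>i<m. A j i * x i) * y j"
      unfolding sum_distrib_right by (intro sum.cong[OF refl])
  qed
  also have "\<dots> = dot m (mv m A x) y"
    unfolding dot_def mv_def by (intro sum.cong) auto
  finally show ?thesis .
qed

lemma qf_expand: "qf m A x = (\<Sum>i<m. \<Sum>j<m. x i * A i j * x j)"
  by (simp add: qf_def dot_def mv_def sum_distrib_left mult.assoc)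

lemma qf_lc: "qf m (lc a A b B) x = a * qf m A x + b * qf m B x"
  by (simp add: qf_expand lc_def sum.distrib sum_distrib_left algebra_simps)

lemma qf_idm: "qf m (idm m) x = dot m x x"
  by (simp add: qf_def)

lemma dot_self_ge: "0 \<le> dot m x x" by (simp add: dot_def sum_nonneg)
lemma dot_self_pos: "nz m x \<Longrightarrow> 0 < dot m x x"
proof -
  assume "nz m x"
  then obtain i where i: "i < m" "x i \<noteq> 0" by (auto simp: nz_def)
  have "0 < (\<Sum>k<m. x k * x k)"
    by (rule sum_pos2[of _ i]) (use i in \<open>auto simp: zero_less_mult_iff\<close>)
  then show ?thesis by (simp add: dot_def)
qed

lemma qf_outer: "qf m (outer m v) x = (dot m v x)^2"
  by (simp add: qf_expand outer_def dot_def power2_eq_square sum_distrib_left sum_distrib_right algebra_simps)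

lemma inv_exists_J:
  assumes "msk m M" "\<And>x. nz m x \<Longrightarrow> nz m (mv m M x)"
  shows "\<exists>N. msk m N \<and> mm m M N = idm m \<and> mm m N M = idm m"
proof -
  define A where "A = Matrix.mat m m (\<lambda>(i, j). M i j)"
  have A: "A \<in> carrier_mat m m" by (simp add: A_def)
  have "det A \<noteq> 0"
  proof
    assume "det A = 0"
    then obtain v where v: "v \<in> carrier_vec m" "v \<noteq> 0\<^sub>v m" "A *\<^sub>v v = 0\<^sub>v m"
      using det_0_iff_vec_prod_zero_field[OF A] by blast
    define x where "x i = (if i < m then v $ i else 0)" for i
    have "nz m x"
    proof (rule ccontr)
      assume "\<not> nz m x"
      then have "\<forall>i<m. v $ i = 0" by (auto simp: nz_def x_def)
      then have "v = 0\<^sub>v m" using v(1) by (intro eq_vecI) auto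
      then show False using v(2) by simp
    qed
    then have "nz m (mv m M x)" by (rule assms(2))
    then obtain i where i: "i < m" "mv m M x i \<noteq> 0" by (auto simp: nz_def)
    have "mv m M x i = (A *\<^sub>v v) $ i"
      using i v(1) by (simp add: mv_def A_def x_def scalar_prod_def mult_mat_vec_def row_def)
        (intro sum.cong, auto)
    also have "\<dots> = 0" using v(3) i by simp
    finally show False using i by simp
  qed
  from det_non_zero_imp_unit[OF A this, of "()"]
  obtain B where B: "B \<in> carrier_mat m m" "B * A = 1\<^sub>m m" "A * B = 1\<^sub>m m"
    unfolding Units_def ring_mat_def by auto
  define N where "N i j = (if i < m \<and> j < m then B $$ (i, j) else 0)" for i j
  have e1: "mm m M N = idm m"
  proof (intro ext)
    fix i j
    show "mm m M N i j = idm m i j"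
    proof (cases "i < m \<and> j < m")
      case True
      have "mm m M N i j = (A * B) $$ (i, j)"
        using True B(1) by (simp add: mm_def N_def A_def scalar_prod_def row_def col_def)
          (intro sum.cong, auto)
      also have "\<dots> = idm m i j" using B(3) True by (simp add: idm_def)
      finally show ?thesis .
    qed (auto simp: mm_def idm_def)
  qed
  have e2: "mm m N M = idm m"
  proof (intro ext)
    fix i j
    show "mm m N M i j = idm m i j"
    proof (cases "i < m \<and> j < m")
      case True
      have "mm m N M i j = (B * A) $$ (i, j)"
        using True B(1) by (simp add: mm_def N_def A_def scalar_prod_def row_def col_def)
          (intro sum.cong, auto)
      also have "\<dots> = idm m i j" using B(2) True by (simp add: idm_def)
      finally show ?thesis .
    qed (auto simp: mm_def idm_def)
  qed
  have "msk m N" by (auto simp: msk_def N_def)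
  then show ?thesis using e1 e2 by blast
qed

definition isinv :: "nat \<Rightarrow> rmat \<Rightarrow> rmat \<Rightarrow> bool" where
  "isinv m M N \<longleftrightarrow> msk m N \<and> mm m M N = idm m \<and> mm m N M = idm m"
definition minv :: "nat \<Rightarrow> rmat \<Rightarrow> rmat" where
  "minv m M = (SOME N. isinv m M N)"
definition bil :: "nat \<Rightarrow> rmat \<Rightarrow> rvec \<Rightarrow> rvec \<Rightarrow> real" where
  "bil m A x y = dot m x (mv m A y)"
definition tp :: "rmat \<Rightarrow> rmat" where "tp A = (\<lambda>i j. A j i)"

lemma inv_exists:
  assumes "msk m M" "\<And>x. nz m x \<Longrightarrow> nz m (mv m M x)"
  shows "\<exists>N. isinv m M N"
  unfolding isinv_def by (rule inv_exists_J[OF assms])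

lemma dot_cong: "(\<And>i. i < m \<Longrightarrow> x i = x' i) \<Longrightarrow> (\<And>i. i < m \<Longrightarrow> y i = y' i) \<Longrightarrow> dot m x y = dot m x' y'"
  unfolding dot_def by (intro sum.cong) auto

lemma mv_cong: "(\<And>i. i < m \<Longrightarrow> x i = x' i) \<Longrightarrow> mv m A x = mv m A x'"
  unfolding mv_def by (intro ext) (auto intro: sum.cong)

lemma mv_idm_cong: "mv m A (mv m (idm m) x) = mv m A x"
  by (rule mv_cong) (simp add: mv_idm)

lemma qf_cong: "(\<And>i. i < m \<Longrightarrow> x i = x' i) \<Longrightarrow> qf m A x = qf m A x'"
  unfolding qf_def by (metis dot_cong mv_cong)

lemma not_nz_dot: "\<not> nz m x \<Longrightarrow> dot m x y = 0"
  unfolding nz_def dot_def by (intro sum.neutral) auto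

lemma not_nz_qf: "\<not> nz m x \<Longrightarrow> qf m A x = 0"
  unfolding qf_def by (rule not_nz_dot)

lemma inv_unique:
  assumes "msk m N1" "msk m N2" "mm m M N1 = idm m" "mm m N2 M = idm m"
  shows "N1 = N2"
proof -
  have "N2 = mm m N2 (idm m)" using assms(2) by (simp add: mm_idm_right)
  also have "\<dots> = mm m N2 (mm m M N1)" using assms(3) by simp
  also have "\<dots> = mm m (mm m N2 M) N1" by (simp add: mm_assoc)
  also have "\<dots> = N1" using assms(1,4) by (simp add: mm_idm_left)
  finally show ?thesis by simp
qed

lemma PD_nz: "PD m M \<Longrightarrow> nz m x \<Longrightarrow> nz m (mv m M x)"
  unfolding PD_def qf_def using not_nz_dot[of m "mv m M x" x] dot_comm[of m x "mv m M x"]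
  by force

lemma minv: "msk m M \<Longrightarrow> PD m M \<Longrightarrow> isinv m M (minv m M)"
  unfolding minv_def using inv_exists[of m M] PD_nz[of m M] by (metis someI_ex)

lemma minv_eq: "msk m M \<Longrightarrow> PD m M \<Longrightarrow> isinv m M N \<Longrightarrow> minv m M = N"
  using minv[of m M] inv_unique unfolding isinv_def by metis

lemma msk_tp: "msk m A \<Longrightarrow> msk m (tp A)" by (auto simp: msk_def tp_def)

lemma mm_tp: "mm m A B i j = mm m (tp B) (tp A) j i"
  by (auto simp: mm_def tp_def mult.commute)

lemma tp_tp: "tp (tp A) = A" by (simp add: tp_def)
lemma tp_symm: "symm A \<Longrightarrow> tp A = A" by (auto simp: tp_def symm_def fun_eq_iff)
lemma tp_idm: "tp (idm m) = idm m" by (rule tp_symm) simp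

lemma symm_minv:
  assumes "msk m M" "PD m M" "symm M" shows "symm (minv m M)"
proof -
  let ?N = "minv m M"
  have i: "isinv m M ?N" using minv assms by blast
  have "isinv m M (tp ?N)"
    unfolding isinv_def
  proof (intro conjI)
    show "msk m (tp ?N)" using i msk_tp by (auto simp: isinv_def)
    show "mm m M (tp ?N) = idm m"
    proof (intro ext)
      fix a b
      have "mm m M (tp ?N) a b = mm m (tp (tp ?N)) (tp M) b a" by (rule mm_tp)
      also have "\<dots> = mm m ?N M b a" using tp_symm[OF assms(3)] by (simp add: tp_tp)
      also have "\<dots> = idm m a b" using i by (auto simp: isinv_def idm_def)
      finally show "mm m M (tp ?N) a b = idm m a b" .
    qed
    show "mm m (tp ?N) M = idm m"
    proof (intro ext)
      fix a b
      have "mm m (tp ?N) M a b = mm m (tp M) (tp (tp ?N)) b a" by (rule mm_tp)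
      also have "\<dots> = mm m M ?N b a" using tp_symm[OF assms(3)] by (simp add: tp_tp)
      also have "\<dots> = idm m a b" using i by (auto simp: isinv_def idm_def)
      finally show "mm m (tp ?N) M a b = idm m a b" .
    qed
  qed
  then have "minv m M = tp ?N" using minv_eq assms by blast
  then show ?thesis unfolding symm_def tp_def by metis
qed

lemma mv_inv_left: "isinv m M N \<Longrightarrow> i < m \<Longrightarrow> mv m M (mv m N x) i = x i"
  unfolding isinv_def by (metis mv_mm mv_idm)
lemma mv_inv_right: "isinv m M N \<Longrightarrow> i < m \<Longrightarrow> mv m N (mv m M x) i = x i"
  unfolding isinv_def by (metis mv_mm mv_idm)

lemma PD_minv:
  assumes "msk m M" "PD m M" "symm M" shows "PD m (minv m M)"
  unfolding PD_def
proof (intro allI impI)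
  fix x assume x: "nz m x"
  let ?N = "minv m M"
  have i: "isinv m M ?N" using minv assms by blast
  let ?y = "mv m ?N x"
  have y: "nz m ?y"
  proof (rule ccontr)
    assume "\<not> nz m ?y"
    then have "mv m M ?y = mv m M (\<lambda>_. 0)" by (intro mv_cong) (auto simp: nz_def)
    have "\<forall>i<m. x i = 0"
    proof (intro allI impI)
      fix j assume j: "j < m"
      have "x j = mv m M ?y j" using mv_inv_left[OF i j] by simp
      also have "\<dots> = mv m M (\<lambda>_. 0) j" using \<open>mv m M ?y = mv m M (\<lambda>_. 0)\<close> by simp
      also have "\<dots> = 0" by (simp add: mv_def)
      finally show "x j = 0" .
    qed
    then show False using x by (auto simp: nz_def)
  qed
  have "qf m ?N x = dot m x ?y" by (simp add: qf_def)
  also have "\<dots> = dot m (mv m M ?y) ?y" by (rule dot_cong) (auto simp: mv_inv_left[OF i])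
  also have "\<dots> = qf m M ?y" by (simp add: qf_def dot_comm)
  finally show "0 < qf m ?N x" using assms(2) y by (simp add: PD_def)
qed

lemma PD_PSD: "PD m A \<Longrightarrow> PSD m A"
  unfolding PD_def PSD_def using not_nz_qf by (metis order_less_le order_refl)

lemma quad_disc:
  fixes a b c :: real
  assumes "\<And>t. 0 \<le> a + 2*t*c + t^2*b" "0 \<le> b"
  shows "c^2 \<le> a*b"
proof (cases "b = 0")
  case True
  have "c = 0"
  proof (rule ccontr)
    assume "c \<noteq> 0"
    have "0 \<le> a + 2*(-(a+1)/(2*c))*c + (-(a+1)/(2*c))^2*b" by (rule assms(1))
    then show False using True \<open>c \<noteq> 0\<close> by (simp add: field_simps)
  qed
  then show ?thesis using True by simp
next
  case False
  then have b: "b > 0" using assms(2) by simp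
  have "0 \<le> a + 2*(-c/b)*c + (-c/b)^2*b" by (rule assms(1))
  then have "0 \<le> a - c^2/b" using b by (simp add: field_simps power2_eq_square)
  then show ?thesis using b by (simp add: field_simps)
qed

lemma qf_add:
  assumes "symm A"
  shows "qf m A (\<lambda>k. x k + t * y k) = qf m A x + 2*t*bil m A x y + t^2 * qf m A y"
proof -
  have s: "\<And>i j. A i j = A j i" using assms by (simp add: symm_def)
  have "bil m A y x = bil m A x y"
    unfolding bil_def by (metis assms dot_comm dot_mv_symm)
  moreover have "qf m A (\<lambda>k. x k + t * y k) = qf m A x + t*bil m A x y + t * bil m A y x + t^2 * qf m A y"
    unfolding qf_expand bil_def dot_def mv_def
    by (simp add: sum.distrib sum_distrib_left algebra_simps power2_eq_square)
  ultimately show ?thesis by simp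
qed

lemma CS_bil:
  assumes "symm A" "PSD m A"
  shows "(bil m A x y)^2 \<le> qf m A x * qf m A y"
proof (rule quad_disc)
  fix t
  show "0 \<le> qf m A x + 2*t*bil m A x y + t^2 * qf m A y"
    using assms qf_add[of A m x t y] by (simp add: PSD_def) (metis PSD_def assms(2))
  show "0 \<le> qf m A y" using assms by (simp add: PSD_def)
qed

lemma tr_outer: "tr m (outer m w) = dot m w w"
  by (simp add: tr_def outer_def dot_def)

lemma tr_mm_outer: "tr m (mm m X (outer m v)) = qf m X v"
proof -
  have "tr m (mm m X (outer m v)) = (\<Sum>i<m. \<Sum>k<m. X i k * (v k * v i))"
    unfolding tr_def mm_def outer_def by (intro sum.cong refl) (auto intro!: sum.cong)
  also have "\<dots> = qf m X v"
    unfolding qf_expand by (intro sum.cong refl) (simp add: mult_ac)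
  finally show ?thesis .
qed

lemma tr_SXS:
  assumes "symm S" "PSD m X"
  shows "0 \<le> tr m (mm m S (mm m X S))"
proof -
  have sS: "\<And>a b. S a b = S b a" using assms(1) by (simp add: symm_def)
  have "tr m (mm m S (mm m X S)) = (\<Sum>i<m. \<Sum>k<m. S i k * (\<Sum>l<m. X k l * S l i))"
    unfolding tr_def mm_def by (intro sum.cong refl) (auto intro!: sum.cong)
  also have "\<dots> = (\<Sum>i<m. qf m X (\<lambda>k. S i k))"
  proof (intro sum.cong refl)
    fix i
    have e: "S i k * (X k l * S l i) = S i k * X k l * S i l" for k l
    proof -
      have "S l i = S i l" by (rule sS)
      then show ?thesis by simp
    qed
    have "(\<Sum>k<m. S i k * (\<Sum>l<m. X k l * S l i)) = (\<Sum>k<m. \<Sum>l<m. S i k * X k l * S i l)"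
      unfolding sum_distrib_left by (intro sum.cong refl) (rule e)
    then show "(\<Sum>k<m. S i k * (\<Sum>l<m. X k l * S l i)) = qf m X (\<lambda>k. S i k)"
      by (simp add: qf_expand)
  qed
  also have "\<dots> \<ge> 0" using assms(2) by (intro sum_nonneg) (simp add: PSD_def)
  finally show ?thesis by simp
qed

lemma tr_SS_pos:
  assumes "0 < m" "symm S" "mm m S Q = idm m"
  shows "0 < tr m (mm m S S)"
proof -
  have sS: "\<And>a b. S a b = S b a" using assms(2) by (simp add: symm_def)
  have "\<exists>k<m. S 0 k \<noteq> 0"
  proof (rule ccontr)
    assume "\<not> ?thesis"
    then have "mm m S Q 0 0 = 0" by (simp add: mm_def)
    then show False using assms by (simp add: idm_def)
  qed
  then obtain k where k: "k < m" "S 0 k \<noteq> 0" by blast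
  have "tr m (mm m S S) = (\<Sum>i<m. \<Sum>k<m. S i k * S i k)"
    unfolding tr_def mm_def using sS by (intro sum.cong refl) (auto intro!: sum.cong)
  also have "\<dots> > 0"
  proof (rule sum_pos2[of _ 0])
    show "0 < (\<Sum>k<m. S 0 k * S 0 k)"
      by (rule sum_pos2[of _ k]) (use k in \<open>auto simp: zero_less_mult_iff\<close>)
  qed (use assms(1) in \<open>auto intro!: sum_nonneg\<close>)
  finally show ?thesis .
qed

lemma sum_delta_r': "i < (m::nat) \<Longrightarrow> (\<Sum>k<m. (f k::real) * (if i = k then 1 else 0)) = f i"
proof -
  assume "i < m"
  have "(\<Sum>k<m. f k * (if i = k then 1 else 0)) = (\<Sum>k<m. if i = k then f k else 0)"
    by (rule sum.cong) auto
  also have "\<dots> = f i" using \<open>i < m\<close> by (subst sum.delta') auto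
  finally show ?thesis .
qed

lemma iso_sum:
  assumes "finite I" "\<And>k l. k < m \<Longrightarrow> l < m \<Longrightarrow> (\<Sum>e\<in>I. v e k * v e l) = (if k = l then 1 else 0)"
  shows "(\<Sum>e\<in>I. qf m X (v e)) = tr m X"
proof -
  have "(\<Sum>e\<in>I. qf m X (v e)) = (\<Sum>e\<in>I. \<Sum>k<m. \<Sum>l<m. X k l * (v e k * v e l))"
    unfolding qf_expand by (simp add: mult_ac)
  also have "\<dots> = (\<Sum>k<m. \<Sum>e\<in>I. \<Sum>l<m. X k l * (v e k * v e l))" by (rule sum.swap)
  also have "\<dots> = (\<Sum>k<m. \<Sum>l<m. \<Sum>e\<in>I. X k l * (v e k * v e l))"
    by (intro sum.cong refl) (rule sum.swap)
  also have "\<dots> = (\<Sum>k<m. \<Sum>l<m. X k l * (if k = l then 1 else 0))"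
    by (intro sum.cong refl) (simp add: sum_distrib_left[symmetric] assms(2))
  also have "\<dots> = tr m X" unfolding tr_def by (intro sum.cong refl) (simp add: sum_delta_r')
  finally show ?thesis .
qed

lemma qf_sum: "qf m (\<lambda>i j. \<Sum>e\<in>I. f e i j) z = (\<Sum>e\<in>I. qf m (f e) z)"
proof -
  have "qf m (\<lambda>i j. \<Sum>e\<in>I. f e i j) z = (\<Sum>i<m. \<Sum>j<m. \<Sum>e\<in>I. z i * f e i j * z j)"
    unfolding qf_expand by (simp add: sum_distrib_left sum_distrib_right)
  also have "\<dots> = (\<Sum>i<m. \<Sum>e\<in>I. \<Sum>j<m. z i * f e i j * z j)"
    by (intro sum.cong refl) (rule sum.swap)
  also have "\<dots> = (\<Sum>e\<in>I. \<Sum>i<m. \<Sum>j<m. z i * f e i j * z j)" by (rule sum.swap)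
  finally show ?thesis unfolding qf_expand .
qed

lemma qf_scale: "qf m (\<lambda>i j. a * A i j) x = a * qf m A x"
  unfolding qf_expand by (simp add: sum_distrib_left mult_ac)

lemma qf_sum_outer: "qf m (\<lambda>i j. \<Sum>e\<in>I. s e * outer m (v e) i j) z = (\<Sum>e\<in>I. s e * (dot m (v e) z)^2)"
  by (simp add: qf_sum qf_scale qf_outer)

lemma PSD_outer: "PSD m (outer m v)" by (simp add: PSD_def qf_outer)

lemma PD_add_PSD: "PD m A \<Longrightarrow> PSD m B \<Longrightarrow> 0 \<le> t \<Longrightarrow> PD m (lc 1 A t B)"
  unfolding PD_def PSD_def by (simp add: qf_lc add_pos_nonneg)

lemma PD_add_idm: "PD m A \<Longrightarrow> 0 \<le> t \<Longrightarrow> PD m (lc 1 A t (idm m))"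
  by (rule PD_add_PSD) (auto simp: PSD_def qf_idm dot_self_ge)

lemma SM:
  assumes "msk m M" "symm M" "isinv m M N" "symm N"
    and c: "c = 1 + t * qf m N v" "c \<noteq> 0"
  shows "isinv m (lc 1 M t (outer m v)) (lc 1 N (-(t/c)) (outer m (mv m N v)))"
proof -
  let ?w = "mv m N v"
  define s where "s = t / c"
  have sc: "s * (1 + t * qf m N v) = t" using c by (simp add: s_def)
  let ?M' = "lc 1 M t (outer m v)" and ?N' = "lc 1 N (-s) (outer m (mv m N v))"
  have mN: "msk m N" using assms(3) by (simp add: isinv_def)
  have sN: "\<And>a b. N a b = N b a" using assms(4) by (simp add: symm_def)
  have 1: "mm m ?M' ?N' = idm m"
  proof (intro ext)
    fix i j
    show "mm m ?M' ?N' i j = idm m i j"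
    proof (cases "i < m \<and> j < m")
      case False then show ?thesis by (auto simp: mm_def idm_def)
    next
      case True
      then have i: "i < m" and j: "j < m" by auto
      have "mm m ?M' ?N' i j = (\<Sum>k<m. (M i k + t * (v i * v k)) * (N k j - s * (?w k * ?w j)))"
        unfolding mm_def lc_def outer_def using i j by (auto intro!: sum.cong)
      also have "\<dots> = (\<Sum>k<m. M i k * N k j) - s * ?w j * (\<Sum>k<m. M i k * ?w k)
          + t * v i * (\<Sum>k<m. v k * N k j) - t * s * v i * ?w j * (\<Sum>k<m. v k * ?w k)"
        by (simp add: algebra_simps sum.distrib sum_subtractf sum_distrib_left sum_distrib_right)
      also have "(\<Sum>k<m. M i k * N k j) = idm m i j"
        using assms(3) i j unfolding isinv_def by (metis mm_def)
      also have "(\<Sum>k<m. M i k * ?w k) = v i"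
        using mv_inv_left[OF assms(3) i, of v] i by (simp add: mv_def)
      also have "(\<Sum>k<m. v k * N k j) = ?w j"
        using j by (simp add: mv_def sN mult.commute)
      also have "(\<Sum>k<m. v k * ?w k) = qf m N v"
        by (simp add: qf_def dot_def)
      finally have "mm m ?M' ?N' i j = idm m i j + v i * ?w j * (t - s * (1 + t * qf m N v))"
        by (simp add: algebra_simps)
      also have "s * (1 + t * qf m N v) = t" by (rule sc)
      finally show ?thesis by simp
    qed
  qed
  have s1: "symm ?M'" using assms(2) by simp
  have s2: "symm ?N'" using assms(4) by simp
  have 2: "mm m ?N' ?M' = idm m"
  proof (intro ext)
    fix i j
    have "mm m ?N' ?M' i j = mm m ?M' ?N' j i" by (rule mm_symm_transp[OF s1 s2])
    then show "mm m ?N' ?M' i j = idm m i j" using 1 by (auto simp: idm_def)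
  qed
  show ?thesis using 1 2 mN by (simp add: isinv_def s_def)
qed

lemma PD_sub_rank1:
  assumes "msk m M" "symm M" "PD m M" "0 \<le> t" "t * qf m (minv m M) v < 1"
  shows "PD m (lc 1 M (-t) (outer m v))"
  unfolding PD_def
proof (intro allI impI)
  fix x assume x: "nz m x"
  let ?N = "minv m M"
  have i: "isinv m M ?N" using minv assms by blast
  let ?y = "mv m ?N v"
  have b: "bil m M ?y x = dot m v x"
  proof -
    have "bil m M ?y x = dot m (mv m M ?y) x" unfolding bil_def by (rule dot_mv_symm[OF assms(2)])
    also have "\<dots> = dot m v x" by (rule dot_cong) (auto simp: mv_inv_left[OF i])
    finally show ?thesis .
  qed
  have q: "qf m M ?y = qf m ?N v"
  proof -
    have "qf m M ?y = dot m ?y (mv m M ?y)" by (simp add: qf_def)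
    also have "\<dots> = dot m ?y v" by (rule dot_cong) (auto simp: mv_inv_left[OF i])
    finally show ?thesis by (simp add: qf_def dot_comm)
  qed
  have cs: "(dot m v x)^2 \<le> qf m ?N v * qf m M x"
    using CS_bil[OF assms(2) PD_PSD[OF assms(3)], of ?y x] b q by simp
  have pM: "0 < qf m M x" using assms(3) x by (simp add: PD_def)
  have "t * (dot m v x)^2 \<le> t * (qf m ?N v * qf m M x)" using cs assms(4) by (simp add: mult_left_mono)
  also have "\<dots> = (t * qf m ?N v) * qf m M x" by simp
  also have "\<dots> < qf m M x" using assms(5) pM by simp
  finally show "0 < qf m (lc 1 M (-t) (outer m v)) x" by (simp add: qf_lc qf_outer)
qed

lemma sum_two:
  assumes "i < (m::nat)" "j < m"
  shows "(\<Sum>k<m. (f k::real) * (a * (if k = i then 1 else 0) + b * (if k = j then 1 else 0))) = a * f i + b * f j"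
proof -
  have "(\<Sum>k<m. f k * (a * (if k = i then 1 else 0) + b * (if k = j then 1 else 0)))
      = (\<Sum>k<m. (if k = i then a * f k else 0) + (if k = j then b * f k else 0))"
    by (intro sum.cong refl) (auto simp: algebra_simps)
  also have "\<dots> = a * f i + b * f j" using assms by (simp add: sum.distrib)
  finally show ?thesis .
qed

lemma qf_two:
  assumes "i < m" "j < m"
  shows "qf m Y (\<lambda>k. a * (if k = i then 1 else 0) + b * (if k = j then 1 else 0))
     = a * a * Y i i + a * b * Y i j + b * a * Y j i + b * b * Y j j"
proof -
  let ?z = "\<lambda>k. a * (if k = i then 1 else 0) + b * (if k = j then 1 else 0)"
  have mvz: "\<And>l. l < m \<Longrightarrow> mv m Y ?z l = a * Y l i + b * Y l j"
    unfolding mv_def using sum_two[OF assms] by simp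
  have "qf m Y ?z = (\<Sum>l<m. (a * Y l i + b * Y l j) * ?z l)"
    unfolding qf_def dot_def by (intro sum.cong refl) (simp add: mvz mult.commute)
  also have "\<dots> = a * (a * Y i i + b * Y i j) + b * (a * Y j i + b * Y j j)"
    using sum_two[OF assms, of "\<lambda>l. a * Y l i + b * Y l j" a b] by simp
  finally show ?thesis by (simp add: algebra_simps)
qed

lemma qf_le_tr:
  assumes "PSD m Y"
  shows "qf m Y x \<le> tr m Y * dot m x x"
proof -
  let ?z = "\<lambda>i j k. x j * (if k = i then 1 else 0) + (- x i) * (if k = j then 1 else 0)"
  have "0 \<le> (\<Sum>i<m. \<Sum>j<m. qf m Y (?z i j))"
    using assms by (intro sum_nonneg) (simp add: PSD_def)
  also have "\<dots> = (\<Sum>i<m. \<Sum>j<m. (x j * x j * Y i i + x i * x i * Y j j) - (x j * x i * Y i j + x i * x j * Y j i))"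
  proof (intro sum.cong refl)
    fix i j assume "i \<in> {..<m}" "j \<in> {..<m}"
    then have "qf m Y (?z i j) = x j * x j * Y i i + x j * (- x i) * Y i j + (- x i) * x j * Y j i + (- x i) * (- x i) * Y j j"
      by (intro qf_two) auto
    then show "qf m Y (?z i j) = (x j * x j * Y i i + x i * x i * Y j j) - (x j * x i * Y i j + x i * x j * Y j i)"
      by (subst \<open>qf m Y (?z i j) = _\<close>) (simp add: algebra_simps)
  qed
  also have "\<dots> = (\<Sum>i<m. \<Sum>j<m. x j * x j * Y i i) + (\<Sum>i<m. \<Sum>j<m. x i * x i * Y j j)
      - ((\<Sum>i<m. \<Sum>j<m. x i * Y i j * x j) + (\<Sum>i<m. \<Sum>j<m. x i * x j * Y j i))"
    by (simp add: sum.distrib sum_subtractf algebra_simps)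
  also have "(\<Sum>i<m. \<Sum>j<m. x i * x j * Y j i) = (\<Sum>j<m. \<Sum>i<m. x i * x j * Y j i)"
    by (rule sum.swap)
  also have "\<dots> = qf m Y x" unfolding qf_expand by (simp add: mult_ac)
  also have "(\<Sum>i<m. \<Sum>j<m. x i * Y i j * x j) = qf m Y x" unfolding qf_expand ..
  also have "(\<Sum>i<m. \<Sum>j<m. x j * x j * Y i i) = (\<Sum>i<m. Y i i * (\<Sum>j<m. x j * x j))"
    by (simp add: sum_distrib_left mult_ac)
  also have "\<dots> = tr m Y * dot m x x"
    by (simp add: tr_def dot_def sum_distrib_right)
  also have "(\<Sum>i<m. \<Sum>j<m. x i * x i * Y j j) = tr m Y * dot m x x"
    by (simp add: tr_def dot_def sum_distrib_left sum_distrib_right mult_ac)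
  finally show ?thesis by simp
qed

lemma PD_shift:
  assumes "msk m M" "symm M" "PD m M" "0 < d" "d * tr m (minv m M) < 1"
  shows "PD m (lc 1 M (-d) (idm m))"
  unfolding PD_def
proof (intro allI impI)
  fix x assume x: "nz m x"
  let ?N = "minv m M"
  have i: "isinv m M ?N" using minv assms by blast
  have sN: "symm ?N" using symm_minv assms by blast
  have pN: "PD m ?N" using PD_minv assms by blast
  let ?y = "mv m ?N x"
  have b: "bil m M x ?y = dot m x x"
    unfolding bil_def by (rule dot_cong) (auto simp: mv_inv_left[OF i])
  have q: "qf m M ?y = qf m ?N x"
  proof -
    have "qf m M ?y = dot m ?y (mv m M ?y)" by (simp add: qf_def)
    also have "\<dots> = dot m ?y x" by (rule dot_cong) (auto simp: mv_inv_left[OF i])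
    finally show ?thesis by (simp add: qf_def dot_comm)
  qed
  have cs: "(dot m x x)^2 \<le> qf m M x * qf m ?N x"
    using CS_bil[OF assms(2) PD_PSD[OF assms(3)], of x ?y] b q by simp
  have pM: "0 < qf m M x" using assms(3) x by (simp add: PD_def)
  have pNx: "0 < qf m ?N x" using pN x by (simp add: PD_def)
  have le: "qf m ?N x \<le> tr m ?N * dot m x x" by (rule qf_le_tr[OF PD_PSD[OF pN]])
  have dx: "0 < dot m x x" using x by (rule dot_self_pos)
  have "(dot m x x)^2 \<le> qf m M x * (tr m ?N * dot m x x)"
    using cs le pM by (meson mult_left_mono order_trans less_imp_le)
  then have "dot m x x \<le> qf m M x * tr m ?N" using dx by (simp add: power2_eq_square)
  then have "d * dot m x x \<le> (d * tr m ?N) * qf m M x" using assms(4) by (simp add: mult_ac)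
  also have "\<dots> < qf m M x" using assms(5) pM by simp
  finally show "0 < qf m (lc 1 M (-d) (idm m)) x" by (simp add: qf_lc qf_idm)
qed

lemma resolvent:
  assumes "msk m X" "symm X" "PD m X" "0 < d"
  defines "Y \<equiv> lc 1 X d (idm m)"
  defines "Xi \<equiv> minv m X" and "Yi \<equiv> minv m Y"
  shows "Xi = lc 1 Yi d (mm m Xi Yi)" "mm m Xi Yi = mm m Yi Xi"
    "tr m Xi = tr m Yi + d * tr m (mm m Xi Yi)"
    "tr m (mm m Xi Yi) = tr m (mm m Yi Yi) + d * tr m (mm m Yi (mm m Xi Yi))"
    "0 \<le> tr m (mm m Yi (mm m Xi Yi))"
proof -
  have mY: "msk m Y" using assms(1) by (simp add: Y_def)
  have pY: "PD m Y" unfolding Y_def using assms(3,4) by (simp add: PD_add_idm)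
  have iX: "isinv m X Xi" using minv assms Xi_def by blast
  have iY: "isinv m Y Yi" using minv mY pY Yi_def by blast
  have mXi: "msk m Xi" and mYi: "msk m Yi" using iX iY by (auto simp: isinv_def)
  have "Xi = mm m Xi (mm m Y Yi)" using iY mXi by (simp add: isinv_def mm_idm_right)
  also have "\<dots> = lc 1 (mm m (mm m Xi X) Yi) d (mm m Xi Yi)"
    unfolding Y_def mm_lc_left mm_lc_right by (simp add: mm_assoc mm_idm_left mYi)
  also have "mm m (mm m Xi X) Yi = Yi" using iX mYi by (simp add: isinv_def mm_idm_left)
  finally show e1: "Xi = lc 1 Yi d (mm m Xi Yi)" .
  have "Xi = mm m (mm m Yi Y) Xi" using iY mXi by (simp add: isinv_def mm_idm_left)
  also have "\<dots> = lc 1 (mm m Yi (mm m X Xi)) d (mm m Yi Xi)"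
    unfolding Y_def mm_assoc mm_lc_left mm_lc_right by (simp add: mm_idm_left mXi)
  also have "mm m Yi (mm m X Xi) = Yi" using iX mYi by (simp add: isinv_def mm_idm_right)
  finally have e2: "Xi = lc 1 Yi d (mm m Yi Xi)" .
  show "mm m Xi Yi = mm m Yi Xi"
  proof (intro ext)
    fix i j
    have "Xi i j = Xi i j" ..
    then have "Yi i j + d * mm m Xi Yi i j = Yi i j + d * mm m Yi Xi i j"
      using e1 e2 by (metis lc_def mult_1)
    then show "mm m Xi Yi i j = mm m Yi Xi i j" using assms(4) by simp
  qed
  show "tr m Xi = tr m Yi + d * tr m (mm m Xi Yi)"
    by (subst e1) (simp add: tr_lc)
  have "mm m Xi Yi = lc 1 (mm m Yi Yi) d (mm m (mm m Xi Yi) Yi)"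
    by (subst e1) (simp add: mm_lc_left)
  then have "tr m (mm m Xi Yi) = tr m (lc 1 (mm m Yi Yi) d (mm m (mm m Xi Yi) Yi))"
    by (rule arg_cong)
  also have "\<dots> = tr m (mm m Yi Yi) + d * tr m (mm m (mm m Xi Yi) Yi)"
    by (simp add: tr_lc)
  also have "tr m (mm m (mm m Xi Yi) Yi) = tr m (mm m Yi (mm m Xi Yi))" by (rule tr_mm_comm)
  finally show "tr m (mm m Xi Yi) = tr m (mm m Yi Yi) + d * tr m (mm m Yi (mm m Xi Yi))" .
  have sYi: "symm Yi" using symm_minv mY pY Yi_def assms(2) by (simp add: Y_def)
  have pXi: "PSD m Xi" using PD_minv assms Xi_def PD_PSD by blast
  show "0 \<le> tr m (mm m Yi (mm m Xi Yi))" by (rule tr_SXS[OF sYi pXi])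
qed

definition upm :: "nat \<Rightarrow> rmat \<Rightarrow> real \<Rightarrow> rmat" where
  "upm m A u = lc u (idm m) (-1) A"
definition lom :: "nat \<Rightarrow> rmat \<Rightarrow> real \<Rightarrow> rmat" where
  "lom m A l = lc 1 A (-l) (idm m)"
definition binv :: "nat \<Rightarrow> rmat \<Rightarrow> real \<Rightarrow> real \<Rightarrow> real \<Rightarrow> real \<Rightarrow> bool" where
  "binv m A l u eL eU \<longleftrightarrow> msk m A \<and> symm A \<and> PD m (upm m A u) \<and> PD m (lom m A l)
     \<and> tr m (minv m (upm m A u)) \<le> eU \<and> tr m (minv m (lom m A l)) \<le> eL"

lemma qf_mm_symm: "symm N \<Longrightarrow> qf m (mm m N N) x = dot m (mv m N x) (mv m N x)"
  unfolding qf_def mv_mm by (rule dot_mv_symm)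

lemma upm_shift: "upm m A (u + d) = lc 1 (upm m A u) d (idm m)"
  by (intro ext) (simp add: upm_def lc_def algebra_simps)
lemma lom_shift: "lom m A l = lc 1 (lom m A (l + d)) d (idm m)"
  by (intro ext) (simp add: lom_def lc_def algebra_simps)
lemma lom_shift': "lom m A (l + d) = lc 1 (lom m A l) (-d) (idm m)"
  by (intro ext) (simp add: lom_def lc_def algebra_simps)
lemma upm_add: "upm m (lc 1 A t B) u = lc 1 (upm m A u) (-t) B"
  by (intro ext) (simp add: upm_def lc_def algebra_simps)
lemma lom_add: "lom m (lc 1 A t B) l = lc 1 (lom m A l) t B"
  by (intro ext) (simp add: lom_def lc_def algebra_simps)

lemma trace_CS:
  assumes "msk m Mi" "msk m Ni" "symm Mi" "symm Ni" "PSD m Ni"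
  shows "(tr m (mm m Mi Ni))^2 \<le> tr m Ni * tr m (mm m Mi (mm m Ni Mi))"
proof (rule quad_disc)
  fix t
  let ?Z = "lc 1 (idm m) t Mi"
  have "0 \<le> tr m (mm m ?Z (mm m Ni ?Z))" by (rule tr_SXS) (use assms in auto)
  also have "tr m (mm m ?Z (mm m Ni ?Z)) = tr m Ni + t * tr m (mm m Mi Ni)
     + t * (tr m (mm m Ni Mi) + t * tr m (mm m Mi (mm m Ni Mi)))"
    using assms(1,2) by (simp add: mm_lc_left mm_lc_right tr_lc mm_idm_right mm_idm_left)
  also have "tr m (mm m Ni Mi) = tr m (mm m Mi Ni)" by (rule tr_mm_comm)
  finally show "0 \<le> tr m Ni + 2*t*tr m (mm m Mi Ni) + t^2 * tr m (mm m Mi (mm m Ni Mi))"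
    by (simp add: algebra_simps power2_eq_square)
  show "0 \<le> tr m (mm m Mi (mm m Ni Mi))" by (rule tr_SXS) (use assms in auto)
qed


lemma bss_step:
  assumes m: "0 < m" and I: "finite I"
    and iso: "\<And>k l. k < m \<Longrightarrow> l < m \<Longrightarrow> (\<Sum>e\<in>I. v e k * v e l) = (if k = l then 1 else 0)"
    and inv: "binv m A l u eL eU"
    and dL: "0 < dL" and dU: "0 < dU" and c1: "dL * eL < 1" and c2: "1/dU + eU \<le> 1/dL - eL"
  shows "\<exists>e\<in>I. \<exists>t>0. binv m (lc 1 A t (outer m (v e))) (l + dL) (u + dU) eL eU"
proof -
  from inv have mA: "msk m A" and sA: "symm A" and pX: "PD m (upm m A u)" and pZ: "PD m (lom m A l)"
    and tX: "tr m (minv m (upm m A u)) \<le> eU" and tZ: "tr m (minv m (lom m A l)) \<le> eL"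
    unfolding binv_def by auto
  define X where "X = upm m A u"
  define Y where "Y = upm m A (u + dU)"
  have YX: "Y = lc 1 X dU (idm m)" unfolding X_def Y_def by (rule upm_shift)
  have mX: "msk m X" and sX: "symm X" using mA sA by (auto simp: X_def upm_def)
  have pX': "PD m X" using pX by (simp add: X_def)
  define Xi where "Xi = minv m X"
  define Yi where "Yi = minv m Y"
  note R = resolvent[OF mX sX pX' dU, folded YX, folded Xi_def Yi_def]
  have mY: "msk m Y" "symm Y" "PD m Y" using mX sX pX' dU by (auto simp: YX intro: PD_add_idm)
  have iY: "isinv m Y Yi" using minv mY Yi_def by auto
  have sYi: "symm Yi" using symm_minv mY Yi_def by auto
  have pYi: "PD m Yi" using PD_minv mY Yi_def by auto
  have mYi: "msk m Yi" using iY by (simp add: isinv_def)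
  define D where "D = tr m Xi - tr m Yi"
  have D1: "D = dU * tr m (mm m Xi Yi)" using R(3) D_def by simp
  have tYY: "0 < tr m (mm m Yi Yi)"
    by (rule tr_SS_pos[OF m sYi, of Y]) (use iY in \<open>simp add: isinv_def\<close>)
  have D2: "dU * tr m (mm m Yi Yi) \<le> D"
    using R(4) R(5) dU D1 by (simp add: mult_left_mono)
  have Dpos: "0 < D" using D2 tYY dU by (smt (verit) mult_pos_pos)
  define U where "U e = qf m (mm m Yi Yi) (v e) / D + qf m Yi (v e)" for e
  define Z where "Z = lom m A l"
  define M where "M = lom m A (l + dL)"
  have ZM: "Z = lc 1 M dL (idm m)" unfolding Z_def M_def by (rule lom_shift)
  have MZ: "M = lc 1 Z (-dL) (idm m)" unfolding Z_def M_def by (rule lom_shift')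
  have mZ: "msk m Z" "symm Z" "PD m Z" using mA sA pZ by (auto simp: Z_def lom_def)
  have pM: "PD m M" unfolding MZ
  proof (rule PD_shift[OF mZ dL])
    have "dL * tr m (minv m Z) \<le> dL * eL" using tZ dL by (simp add: Z_def)
    then show "dL * tr m (minv m Z) < 1" using c1 by simp
  qed
  have mM: "msk m M" "symm M" using mA sA by (auto simp: M_def lom_def)
  define Mi where "Mi = minv m M"
  define Ni where "Ni = minv m Z"
  note R2 = resolvent[OF mM pM dL, folded ZM, folded Mi_def Ni_def]
  have iM: "isinv m M Mi" using minv mM pM Mi_def by auto
  have sMi: "symm Mi" using symm_minv mM pM Mi_def by auto
  have pMi: "PD m Mi" using PD_minv mM pM Mi_def by auto
  have mMi: "msk m Mi" using iM by (simp add: isinv_def)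
  have iZ: "isinv m Z Ni" using minv mZ Ni_def by auto
  have sNi: "symm Ni" using symm_minv mZ Ni_def by auto
  have pNi: "PD m Ni" using PD_minv mZ Ni_def by auto
  have mNi: "msk m Ni" using iZ by (simp add: isinv_def)
  define T where "T = tr m (mm m Mi Ni)"
  define RR where "RR = tr m (mm m Mi (mm m Ni Mi))"
  define Dl where "Dl = tr m Mi - tr m Ni"
  have Dl1: "Dl = dL * T" using R2(3) Dl_def T_def by simp
  have tNN: "0 < tr m (mm m Ni Ni)"
    by (rule tr_SS_pos[OF m sNi, of Z]) (use iZ in \<open>simp add: isinv_def\<close>)
  have Tpos: "0 < T" using R2(4) R2(5) dL tNN T_def by (smt (verit) mult_nonneg_nonneg)
  have Dlpos: "0 < Dl" using Dl1 Tpos dL by simp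
  define L where "L e = qf m (mm m Mi Mi) (v e) / Dl - qf m Mi (v e)" for e
  have sumU: "(\<Sum>e\<in>I. U e) = tr m (mm m Yi Yi) / D + tr m Yi"
    unfolding U_def by (simp add: sum.distrib sum_divide_distrib[symmetric] iso_sum[OF I iso])
  have "tr m (mm m Yi Yi) / D \<le> 1 / dU" using D2 Dpos dU by (simp add: field_simps)
  moreover have "tr m Yi \<le> eU" using Dpos tX D_def by (simp add: X_def Xi_def)
  ultimately have sumU_le: "(\<Sum>e\<in>I. U e) \<le> 1/dU + eU" using sumU by simp
  have sumL: "(\<Sum>e\<in>I. L e) = tr m (mm m Mi Mi) / Dl - tr m Mi"
    unfolding L_def by (simp add: sum_subtractf sum_divide_distrib[symmetric] iso_sum[OF I iso])
  have "mm m Mi Mi = mm m Mi (lc 1 Ni dL (mm m Mi Ni))" using R2(1) by (rule arg_cong)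
  also have "\<dots> = lc 1 (mm m Mi Ni) dL (mm m Mi (mm m Mi Ni))" by (simp add: mm_lc_right)
  finally have "tr m (mm m Mi Mi) = T + dL * tr m (mm m Mi (mm m Mi Ni))"
    by (simp add: tr_lc T_def)
  also have "mm m Mi Ni = mm m Ni Mi" by (rule R2(2))
  finally have MiMi: "tr m (mm m Mi Mi) = T + dL * RR" using RR_def T_def R2(2) by simp
  have CS: "T^2 \<le> tr m Ni * RR" unfolding T_def RR_def
    by (rule trace_CS[OF mMi mNi sMi sNi PD_PSD[OF pNi]])
  have RR0: "0 \<le> RR" unfolding RR_def by (rule tr_SXS[OF sMi PD_PSD[OF pNi]])
  have tNi: "tr m Ni \<le> eL" using tZ by (simp add: Ni_def Z_def)
  have "dL * T^2 \<le> dL * (tr m Ni * RR)" using CS dL by simp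
  also have "\<dots> \<le> dL * (eL * RR)" using tNi RR0 dL by (simp add: mult_right_mono)
  also have "\<dots> \<le> RR"
  proof -
    have "(dL * eL) * RR \<le> 1 * RR" using c1 RR0 by (intro mult_right_mono) auto
    then show ?thesis by (simp add: mult.assoc)
  qed
  finally have RRT: "dL * T^2 \<le> RR" .
  have trMi: "tr m Mi = tr m Ni + dL * T" using Dl_def Dl1 by simp
  have "(\<Sum>e\<in>I. L e) = 1/dL + RR/T - tr m Ni - dL * T"
    unfolding sumL MiMi Dl1 trMi using Tpos dL by (simp add: field_simps)
  moreover have "dL * T \<le> RR / T" using RRT Tpos by (simp add: field_simps power2_eq_square)
  ultimately have sumL_ge: "1/dL - eL \<le> (\<Sum>e\<in>I. L e)" using tNi by simp
  have pos: "0 < 1/dL - eL" using c1 dL by (simp add: field_simps)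
  have Uge: "0 \<le> U e" for e
  proof -
    have "0 \<le> qf m (mm m Yi Yi) (v e)" by (simp add: qf_mm_symm[OF sYi] dot_self_ge)
    moreover have "0 \<le> qf m Yi (v e)" using PD_PSD[OF pYi] by (simp add: PSD_def)
    ultimately show ?thesis unfolding U_def using Dpos by simp
  qed
  have U0: "L e = 0" if "U e = 0" for e
  proof -
    have "0 \<le> qf m (mm m Yi Yi) (v e)" by (simp add: qf_mm_symm[OF sYi] dot_self_ge)
    moreover have "0 \<le> qf m Yi (v e)" using PD_PSD[OF pYi] by (simp add: PSD_def)
    ultimately have "qf m Yi (v e) = 0" using that Dpos unfolding U_def
      by (smt (verit) divide_nonneg_pos)
    then have "\<not> nz m (v e)" using pYi by (auto simp: PD_def)
    then show ?thesis unfolding L_def by (simp add: not_nz_qf)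
  qed
  have "\<exists>e\<in>I. 0 < U e \<and> U e \<le> L e"
  proof (rule ccontr)
    assume na: "\<not> ?thesis"
    have le: "\<forall>e\<in>I. L e \<le> U e"
    proof
      fix e assume "e \<in> I"
      show "L e \<le> U e"
      proof (cases "U e = 0")
        case True then show ?thesis using U0 by simp
      next
        case False then have "0 < U e" using Uge[of e] by simp
        then show ?thesis using na \<open>e \<in> I\<close> by auto
      qed
    qed
    have "0 < (\<Sum>e\<in>I. L e)" using sumL_ge pos by simp
    then obtain e where e: "e \<in> I" "0 < L e"
      by (metis not_le sum_nonpos)
    then have "0 < U e" using le by force
    then have "L e < U e" using na e by auto
    then have "(\<Sum>e\<in>I. L e) < (\<Sum>e\<in>I. U e)"
      using sum_strict_mono_ex1[OF I le] e(1) by blast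
    then show False using sumU_le sumL_ge c2 by simp
  qed
  then obtain e where e: "e \<in> I" "0 < U e" "U e \<le> L e" by blast
  define t where "t = 1 / U e"
  have t0: "0 < t" using e by (simp add: t_def)
  have tU: "1 / t = U e" by (simp add: t_def)
  let ?v = "v e"
  have nzv: "nz m ?v"
  proof (rule ccontr)
    assume "\<not> nz m ?v"
    then have "U e = 0" unfolding U_def by (simp add: not_nz_qf)
    then show False using e by simp
  qed
  define q where "q = qf m Yi ?v"
  define p where "p = qf m (mm m Yi Yi) ?v"
  define w where "w = mv m Yi ?v"
  have pw: "p = dot m w w" by (simp add: p_def w_def qf_mm_symm[OF sYi])
  have ppos: "0 < p" unfolding pw w_def by (rule dot_self_pos[OF PD_nz[OF pYi nzv]])
  have q0: "0 \<le> q" using PD_PSD[OF pYi] by (simp add: PSD_def q_def)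
  have Ue: "U e = p / D + q" by (simp add: U_def p_def q_def)
  have tq: "t * q < 1"
  proof -
    have "q < U e" using Ue ppos Dpos by simp
    then have "t * q < t * U e" using t0 by simp
    moreover have "t * U e = 1" using tU t0 by (simp add: field_simps)
    ultimately show ?thesis by simp
  qed
  define Y' where "Y' = lc 1 Y (-t) (outer m ?v)"
  have pY': "PD m Y'" unfolding Y'_def
    by (rule PD_sub_rank1[OF mY(1) mY(2) mY(3)]) (use t0 tq in \<open>auto simp: Yi_def q_def\<close>)
  define c where "c = 1 + (-t) * qf m Yi ?v"
  have c0: "c \<noteq> 0" "c = 1 - t * q" using tq by (auto simp: c_def q_def)
  have iY': "isinv m Y' (lc 1 Yi (-((-t)/c)) (outer m w))"
    unfolding Y'_def w_def by (rule SM[OF mY(1) mY(2) iY sYi c_def c0(1)])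
  have mY': "msk m Y'" using mY by (simp add: Y'_def)
  have Y'inv: "minv m Y' = lc 1 Yi (-((-t)/c)) (outer m w)" by (rule minv_eq[OF mY' pY' iY'])
  have "tr m (minv m Y') = tr m Yi + (t / c) * p"
    unfolding Y'inv by (simp add: tr_lc tr_outer pw)
  also have "(t / c) * p = D"
  proof -
    have "p / D = 1/t - q" using Ue tU by simp
    then have "p = D * (1 - t * q) / t" using Dpos t0 by (simp add: field_simps)
    then have "p = D * c / t" using c0(2) by simp
    then show ?thesis using c0(1) t0 by (simp add: field_simps)
  qed
  also have "tr m Yi + D = tr m Xi" by (simp add: D_def)
  finally have trY': "tr m (minv m Y') \<le> eU" using tX by (simp add: X_def Xi_def)
  have upmA': "upm m (lc 1 A t (outer m ?v)) (u + dU) = Y'" by (simp add: upm_add Y_def Y'_def)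
  define qM where "qM = qf m Mi ?v"
  define pM' where "pM' = qf m (mm m Mi Mi) ?v"
  define wM where "wM = mv m Mi ?v"
  have pwM: "pM' = dot m wM wM" by (simp add: pM'_def wM_def qf_mm_symm[OF sMi])
  have qM0: "0 \<le> qM" using PD_PSD[OF pMi] by (simp add: PSD_def qM_def)
  define M' where "M' = lc 1 M t (outer m ?v)"
  have pM'': "PD m M'" unfolding M'_def by (rule PD_add_PSD[OF pM PSD_outer]) (use t0 in simp)
  define c' where "c' = 1 + t * qf m Mi ?v"
  have c'0: "0 < c'"
  proof -
    have "0 \<le> t * qM" using t0 qM0 by simp
    then show ?thesis by (simp add: c'_def qM_def)
  qed
  have iM': "isinv m M' (lc 1 Mi (-(t/c')) (outer m wM))"
    unfolding M'_def wM_def by (rule SM[OF mM(1) mM(2) iM sMi c'_def]) (use c'0 in simp)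
  have mM': "msk m M'" using mM by (simp add: M'_def)
  have M'inv: "minv m M' = lc 1 Mi (-(t/c')) (outer m wM)" by (rule minv_eq[OF mM' pM'' iM'])
  have trM': "tr m (minv m M') = tr m Mi - (t / c') * pM'"
    unfolding M'inv by (simp add: tr_lc tr_outer pwM)
  have Le: "L e = pM' / Dl - qM" by (simp add: L_def pM'_def qM_def)
  have "Dl \<le> (t / c') * pM'"
  proof -
    have "1/t \<le> pM' / Dl - qM" using e(3) tU Le by simp
    then have "1/t + qM \<le> pM' / Dl" by simp
    then have "(1/t + qM) * Dl \<le> pM'" using Dlpos by (simp add: field_simps)
    moreover have "1/t + qM = c' / t" using t0 by (simp add: c'_def qM_def field_simps)
    ultimately have "c' / t * Dl \<le> pM'" by simp
    then show ?thesis using t0 c'0 by (simp add: field_simps)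
  qed
  then have trM'': "tr m (minv m M') \<le> eL" using trM' Dl_def tNi by simp
  have lomA': "lom m (lc 1 A t (outer m ?v)) (l + dL) = M'" by (simp add: lom_add M_def M'_def)
  have "binv m (lc 1 A t (outer m ?v)) (l + dL) (u + dU) eL eU"
    unfolding binv_def upmA' lomA' using mA sA pY' pM'' trY' trM'' by simp
  then show ?thesis using e(1) t0 by blast
qed

lemma mm_scale_left: "mm m (\<lambda>i j. a * A i j) B = (\<lambda>i j. a * mm m A B i j)"
  by (intro ext) (simp add: mm_def sum_distrib_left mult_ac)
lemma mm_scale_right: "mm m A (\<lambda>i j. a * B i j) = (\<lambda>i j. a * mm m A B i j)"
  by (intro ext) (simp add: mm_def sum_distrib_left mult_ac)

lemma isinv_scal: "c \<noteq> 0 \<Longrightarrow> isinv m (\<lambda>i j. c * idm m i j) (\<lambda>i j. (1/c) * idm m i j)"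
  unfolding isinv_def mm_scale_left mm_scale_right mm_idm_left[OF msk_idm]
  by (auto simp: msk_def idm_def fun_eq_iff)

lemma PD_scal: "0 < c \<Longrightarrow> PD m (\<lambda>i j. c * idm m i j)"
  unfolding PD_def by (simp add: qf_scale qf_idm dot_self_pos)

lemma tr_scal_idm: "tr m (\<lambda>i j. a * idm m i j) = a * real m"
  by (simp add: tr_def idm_def)

lemma binv_base:
  assumes "0 < u0" "l0 < 0"
  shows "binv m (\<lambda>i j. 0) l0 u0 (real m / (-l0)) (real m / u0)"
proof -
  have u: "upm m (\<lambda>i j. 0) u0 = (\<lambda>i j. u0 * idm m i j)" by (intro ext) (simp add: upm_def lc_def)
  have l: "lom m (\<lambda>i j. 0) l0 = (\<lambda>i j. (-l0) * idm m i j)" by (intro ext) (simp add: lom_def lc_def)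
  have mu: "msk m (\<lambda>i j. u0 * idm m i j)" and ml: "msk m (\<lambda>i j. (-l0) * idm m i j)"
    by (auto simp: msk_def idm_def)
  have pu: "PD m (\<lambda>i j. u0 * idm m i j)" using assms by (intro PD_scal) auto
  have pl: "PD m (\<lambda>i j. (-l0) * idm m i j)" using assms by (intro PD_scal) auto
  have iu: "minv m (\<lambda>i j. u0 * idm m i j) = (\<lambda>i j. (1/u0) * idm m i j)"
    using assms by (intro minv_eq[OF mu pu] isinv_scal) auto
  have il: "minv m (\<lambda>i j. (-l0) * idm m i j) = (\<lambda>i j. (1/(-l0)) * idm m i j)"
    using assms by (intro minv_eq[OF ml pl] isinv_scal) auto
  have t1: "tr m (\<lambda>i j. (1/u0) * idm m i j) = real m / u0" unfolding tr_scal_idm by simp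
  have t2: "tr m (\<lambda>i j. (1/(-l0)) * idm m i j) = real m / (-l0)" unfolding tr_scal_idm by simp
  show ?thesis unfolding binv_def u l iu il t1 t2 using pu pl
    by (simp add: msk_def symm_def)
qed

lemma Amat_update:
  assumes "e \<in> I" "finite I"
  shows "(\<lambda>i j. \<Sum>e'\<in>I. (s(e := s e + t)) e' * outer m (v e') i j)
       = lc 1 (\<lambda>i j. \<Sum>e'\<in>I. s e' * outer m (v e') i j) t (outer m (v e))"
proof (intro ext)
  fix i j
  have "(\<Sum>e'\<in>I. (s(e := s e + t)) e' * outer m (v e') i j)
      = (\<Sum>e'\<in>I. s e' * outer m (v e') i j + (if e' = e then t * outer m (v e') i j else 0))"
    by (intro sum.cong refl) (auto simp: algebra_simps)
  also have "\<dots> = (\<Sum>e'\<in>I. s e' * outer m (v e') i j) + t * outer m (v e) i j"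
    using assms by (simp add: sum.distrib)
  finally show "(\<Sum>e'\<in>I. (s(e := s e + t)) e' * outer m (v e') i j)
       = lc 1 (\<lambda>i j. \<Sum>e'\<in>I. s e' * outer m (v e') i j) t (outer m (v e)) i j"
    by (simp add: lc_def)
qed

lemma bss_iter:
  assumes m: "0 < m" and I: "finite I"
    and iso: "\<And>k l. k < m \<Longrightarrow> l < m \<Longrightarrow> (\<Sum>e\<in>I. v e k * v e l) = (if k = l then 1 else 0)"
    and dL: "0 < dL" and dU: "0 < dU" and c1: "dL * eL < 1" and c2: "1/dU + eU \<le> 1/dL - eL"
    and base: "binv m (\<lambda>i j. 0) l0 u0 eL eU"
  shows "\<exists>s. (\<forall>e. 0 \<le> s e) \<and> card {e\<in>I. s e \<noteq> 0} \<le> k \<and>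
     binv m (\<lambda>i j. \<Sum>e\<in>I. s e * outer m (v e) i j) (l0 + real k * dL) (u0 + real k * dU) eL eU"
proof (induction k)
  case 0
  have "(\<lambda>i j. \<Sum>e\<in>I. (0::real) * outer m (v e) i j) = (\<lambda>i j. 0)" by simp
  then show ?case using base by (intro exI[of _ "\<lambda>_. 0"]) simp
next
  case (Suc k)
  then obtain s where s: "\<forall>e. 0 \<le> s e" "card {e\<in>I. s e \<noteq> 0} \<le> k"
    "binv m (\<lambda>i j. \<Sum>e\<in>I. s e * outer m (v e) i j) (l0 + real k * dL) (u0 + real k * dU) eL eU"
    by blast
  obtain e t where e: "e \<in> I" "0 < t"
    "binv m (lc 1 (\<lambda>i j. \<Sum>e\<in>I. s e * outer m (v e) i j) t (outer m (v e)))
        (l0 + real k * dL + dL) (u0 + real k * dU + dU) eL eU"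
    using bss_step[OF m I iso s(3) dL dU c1 c2] by blast
  let ?s = "s(e := s e + t)"
  have "{e'\<in>I. ?s e' \<noteq> 0} \<subseteq> insert e {e'\<in>I. s e' \<noteq> 0}" by auto
  then have "card {e'\<in>I. ?s e' \<noteq> 0} \<le> card (insert e {e'\<in>I. s e' \<noteq> 0})"
    using I by (intro card_mono) auto
  also have "\<dots> \<le> Suc (card {e'\<in>I. s e' \<noteq> 0})" by (simp add: card_insert_le_m1 card_insert_if I)
  finally have cs: "card {e'\<in>I. ?s e' \<noteq> 0} \<le> Suc k" using s(2) by simp
  have nn: "\<forall>e'. 0 \<le> ?s e'" using s(1) e(2) by (simp add: add_nonneg_nonneg less_imp_le)
  have "binv m (\<lambda>i j. \<Sum>e'\<in>I. ?s e' * outer m (v e') i j) (l0 + real (Suc k) * dL) (u0 + real (Suc k) * dU) eL eU"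
    unfolding Amat_update[OF e(1) I] using e(3) by (simp add: algebra_simps)
  then show ?case using cs nn by blast
qed

lemma c2alg: "2 \<le> (rr::real) \<Longrightarrow> 1 / ((rr + 1) / (rr - 1)) + (rr - 1) / (rr * (rr + 1)) = 1 - 1/rr"
proof -
  assume rr: "2 \<le> rr"
  have a: "rr + 1 \<noteq> 0" "rr - 1 \<noteq> 0" "rr \<noteq> 0" using rr by auto
  have e1: "1 / ((rr + 1) / (rr - 1)) = (rr - 1) / (rr + 1)" by simp
  have e2: "(rr - 1) / (rr + 1) = ((rr - 1) * rr) / ((rr + 1) * rr)" using a by simp
  have e3: "((rr - 1) * rr) / ((rr + 1) * rr) + (rr - 1) / (rr * (rr + 1)) = ((rr - 1) * rr + (rr - 1)) / (rr * (rr + 1))"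
    by (simp add: add_divide_distrib mult.commute)
  have e4: "(rr - 1) * rr + (rr - 1) = (rr - 1) * (rr + 1)" by (simp add: algebra_simps)
  have e5: "(rr - 1) * (rr + 1) / (rr * (rr + 1)) = (rr - 1) / rr" using a by simp
  have e6: "(rr - 1) / rr = 1 - 1/rr" using a by (simp add: diff_divide_distrib)
  show ?thesis unfolding e1 e2 e3 e4 e5 e6 ..
qed

lemma bss_main:
  assumes I: "finite I"
    and iso: "\<And>k l. k < m \<Longrightarrow> l < m \<Longrightarrow> (\<Sum>e\<in>I. v e k * v e l) = (if k = l then 1 else 0)"
    and r: "2 \<le> r"
  shows "\<exists>s. (\<forall>e. 0 \<le> s e) \<and> card {e\<in>I. s e \<noteq> 0} \<le> r^2 * m \<and>
     (\<forall>z. real m * real r * (real r - 1) * dot m z z \<le> (\<Sum>e\<in>I. s e * (dot m (v e) z)^2)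
        \<and> (\<Sum>e\<in>I. s e * (dot m (v e) z)^2) \<le> real m * real r * (real r + 1) * ((real r + 1) / (real r - 1)) * dot m z z)"
proof (cases "m = 0")
  case True
  then show ?thesis by (intro exI[of _ "\<lambda>_. 0"]) (simp add: dot_def)
next
  case False
  then have m: "0 < m" by simp
  define rr where "rr = real r"
  have rr: "2 \<le> rr" using r by (simp add: rr_def)
  define l0 where "l0 = - (real m * rr)"
  define dU where "dU = (rr + 1) / (rr - 1)"
  have dU0: "0 < dU" using rr by (simp add: dU_def)
  define u0 where "u0 = real m * (rr * dU)"
  define eU where "eU = 1 / (rr * dU)"
  define eL where "eL = 1 / rr"
  have u0: "0 < u0" using m rr dU0 by (simp add: u0_def)
  have l0: "l0 < 0" using m rr by (simp add: l0_def)
  have eL': "real m / (-l0) = eL" using m rr by (simp add: l0_def eL_def)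
  have eU': "real m / u0 = eU"
  proof -
    show ?thesis using m by (simp add: u0_def eU_def)
  qed
  have base: "binv m (\<lambda>i j. 0) l0 u0 eL eU" using binv_base[OF u0 l0, of m] eL' eU' by simp
  have dU: "0 < dU" using rr by (simp add: dU_def)
  have c1: "1 * eL < 1" using rr by (simp add: eL_def)
  have eU2: "eU = (rr - 1) / (rr * (rr + 1))" by (simp add: eU_def dU_def)
  have c2: "1/dU + eU \<le> 1/1 - eL"
    using c2alg[OF rr] unfolding eU2 by (simp add: dU_def eL_def)
  obtain s where s: "\<forall>e. 0 \<le> s e" "card {e\<in>I. s e \<noteq> 0} \<le> r^2 * m"
    "binv m (\<lambda>i j. \<Sum>e\<in>I. s e * outer m (v e) i j) (l0 + real (r^2 * m) * 1) (u0 + real (r^2 * m) * dU) eL eU"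
    using bss_iter[OF m I iso _ dU c1 c2 base, of "r^2 * m"] by auto
  define A where "A = (\<lambda>i j. \<Sum>e\<in>I. s e * outer m (v e) i j)"
  have lval: "l0 + real (r^2 * m) * 1 = real m * rr * (rr - 1)"
    by (simp add: l0_def rr_def algebra_simps power2_eq_square)
  have uval: "u0 + real (r^2 * m) * dU = real m * rr * (rr + 1) * dU"
    by (simp add: u0_def rr_def algebra_simps power2_eq_square)
  have pl: "PD m (lom m A (real m * rr * (rr - 1)))" and pu: "PD m (upm m A (real m * rr * (rr + 1) * dU))"
    using s(3) unfolding binv_def lval uval A_def by auto
  have qA: "qf m A z = (\<Sum>e\<in>I. s e * (dot m (v e) z)^2)" for z
    unfolding A_def by (rule qf_sum_outer)
  show ?thesis
  proof (intro exI[of _ s] conjI allI)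
    show "\<And>e. 0 \<le> s e" "card {e\<in>I. s e \<noteq> 0} \<le> r^2 * m" using s by auto
    fix z
    show "real m * real r * (real r - 1) * dot m z z \<le> (\<Sum>e\<in>I. s e * (dot m (v e) z)^2)"
    proof (cases "nz m z")
      case True
      then have "0 < qf m (lom m A (real m * rr * (rr - 1))) z" using pl by (simp add: PD_def)
      then show ?thesis by (simp add: lom_def qf_lc qf_idm qA rr_def)
    next
      case False
      have dz: "\<And>y. dot m y z = 0" using False not_nz_dot dot_comm by metis
      have "dot m z z = 0" using False by (simp add: not_nz_dot)
      then show ?thesis by (simp add: dz)
    qed
    show "(\<Sum>e\<in>I. s e * (dot m (v e) z)^2) \<le> real m * real r * (real r + 1) * ((real r + 1) / (real r - 1)) * dot m z z"
    proof (cases "nz m z")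
      case True
      then have "0 < qf m (upm m A (real m * rr * (rr + 1) * dU)) z" using pu by (simp add: PD_def)
      then have h: "(\<Sum>e\<in>I. s e * (dot m (v e) z)^2) < real m * real r * (real r + 1) * dU * dot m z z"
        by (simp add: upm_def qf_lc qf_idm qA rr_def)
      show ?thesis using h unfolding dU_def rr_def by (rule less_imp_le)
    next
      case False
      have dz: "\<And>y. dot m y z = 0" using False not_nz_dot dot_comm by metis
      have "dot m z z = 0" using False by (simp add: not_nz_dot)
      then show ?thesis by (simp add: dz)
    qed
  qed
qed

lemma eps_bound:
  fixes e a :: real
  assumes "0 < e" "e < 1" "1 \<le> a" "a \<le> 1 + e/2"
  shows "(1 - e) * a^2 \<le> 1 + e"
proof -
  have "a^2 \<le> (1 + e/2)^2" using assms by (intro power_mono) auto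
  then have "(1 - e) * a^2 \<le> (1 - e) * (1 + e/2)^2" using assms by (intro mult_left_mono) auto
  also have "\<dots> = 1 - e^2 * (3 + e) / 4" by (simp add: field_simps power2_eq_square)
  also have "\<dots> \<le> 1 + e"
  proof -
    have "0 \<le> e^2 * (3 + e) / 4" using assms by simp
    then show ?thesis using assms by linarith
  qed
  finally show ?thesis .
qed

theorem bss_eps:
  assumes I: "finite I"
    and iso: "\<And>k l. k < m \<Longrightarrow> l < m \<Longrightarrow> (\<Sum>e\<in>I. v e k * v e l) = (if k = l then 1 else 0)"
    and e: "0 < eps" "eps < 1"
  shows "\<exists>s. (\<forall>e. 0 \<le> s e) \<and> real (card {e\<in>I. s e \<noteq> 0}) \<le> 36 * real m / eps^2 \<and>
     (\<forall>z. (1 - eps) * dot m z z \<le> (\<Sum>e\<in>I. s e * (dot m (v e) z)^2)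
        \<and> (\<Sum>e\<in>I. s e * (dot m (v e) z)^2) \<le> (1 + eps) * dot m z z)"
proof (cases "m = 0")
  case True
  then show ?thesis by (intro exI[of _ "\<lambda>_. 0"]) (simp add: dot_def)
next
  case False
  then have m: "0 < m" by simp
  define r where "r = nat \<lceil>4/eps\<rceil> + 1"
  have cz: "0 \<le> \<lceil>4/eps\<rceil>"
  proof -
    have "0 < 4/eps" using e by simp
    then have "-1 < 4/eps" by linarith
    then show ?thesis by simp
  qed
  have rc: "real r = real_of_int \<lceil>4/eps\<rceil> + 1" unfolding r_def using cz by simp
  have r4: "4/eps \<le> real r - 1" unfolding rc by (simp add: le_of_int_ceiling)
  have r6: "real r \<le> 6/eps"
  proof -
    have "real_of_int \<lceil>4/eps\<rceil> \<le> 4/eps + 1" using ceiling_correct[of "4/eps"] by linarith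
    then have "real r \<le> 4/eps + 2" unfolding rc by linarith
    also have "\<dots> \<le> 6/eps" using e by (simp add: field_simps)
    finally show ?thesis .
  qed
  have "4 < 4/eps" using e by (simp add: field_simps)
  then have r2: "2 \<le> r" using r4 by linarith
  obtain s where s: "\<forall>e. 0 \<le> s e" "card {e\<in>I. s e \<noteq> 0} \<le> r^2 * m"
    "\<forall>z. real m * real r * (real r - 1) * dot m z z \<le> (\<Sum>e\<in>I. s e * (dot m (v e) z)^2)
        \<and> (\<Sum>e\<in>I. s e * (dot m (v e) z)^2) \<le> real m * real r * (real r + 1) * ((real r + 1) / (real r - 1)) * dot m z z"
    using bss_main[OF I iso r2] by blast
  define L where "L = real m * real r * (real r - 1)"
  have Lpos: "0 < L" using m r2 by (simp add: L_def)
  define c where "c = (1 - eps) / L"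
  have c0: "0 \<le> c" using e Lpos by (simp add: c_def)
  define a where "a = (real r + 1) / (real r - 1)"
  have a1: "1 \<le> a" using r2 by (simp add: a_def)
  have a2: "a \<le> 1 + eps/2"
  proof -
    have "a = 1 + 2 / (real r - 1)" using r2 by (simp add: a_def field_simps)
    also have "2 / (real r - 1) \<le> eps/2"
    proof -
      have "0 < real r - 1" using r2 by simp
      then have "2 / (real r - 1) \<le> 2 / (4/eps)" using r4 e by (intro divide_left_mono) auto
      also have "\<dots> = eps/2" by simp
      finally show ?thesis .
    qed
    finally show ?thesis by simp
  qed
  have cu: "c * (real m * real r * (real r + 1) * ((real r + 1) / (real r - 1))) \<le> 1 + eps"
  proof -
    have nz: "real m * real r \<noteq> 0" using r2 m by simp
    have "c * (real m * real r * (real r + 1) * ((real r + 1) / (real r - 1)))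
        = (1 - eps) * ((real m * real r) * ((real r + 1) * a)) / ((real m * real r) * (real r - 1))"
      by (simp add: c_def L_def a_def mult_ac)
    also have "\<dots> = ((real m * real r) * ((1 - eps) * ((real r + 1) * a))) / ((real m * real r) * (real r - 1))"
      by (simp add: mult_ac)
    also have "\<dots> = (1 - eps) * ((real r + 1) * a) / (real r - 1)"
      using nz by (rule mult_divide_mult_cancel_left)
    also have "\<dots> = (1 - eps) * a^2" by (simp add: a_def power2_eq_square)
    also have "\<dots> \<le> 1 + eps" by (rule eps_bound[OF e a1 a2])
    finally show ?thesis .
  qed
  have cl: "c * L = 1 - eps" using Lpos by (simp add: c_def)
  show ?thesis
  proof (intro exI[of _ "\<lambda>e. c * s e"] conjI allI)
    show "\<And>e. 0 \<le> c * s e" using s(1) c0 by simp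
    have "{e\<in>I. c * s e \<noteq> 0} \<subseteq> {e\<in>I. s e \<noteq> 0}" by auto
    then have "card {e\<in>I. c * s e \<noteq> 0} \<le> card {e\<in>I. s e \<noteq> 0}" using I by (intro card_mono) auto
    then have "card {e\<in>I. c * s e \<noteq> 0} \<le> r^2 * m" using s(2) by linarith
    then have "real (card {e\<in>I. c * s e \<noteq> 0}) \<le> real (r^2 * m)" by (simp only: of_nat_le_iff)
    also have "\<dots> = real r ^ 2 * real m" by simp
    finally have "real (card {e\<in>I. c * s e \<noteq> 0}) \<le> real r ^ 2 * real m" .
    also have "\<dots> \<le> (6/eps)^2 * real m" using r6 by (intro mult_right_mono power_mono) auto
    also have "\<dots> = 36 * real m / eps^2" by (simp add: power2_eq_square field_simps)
    finally show "real (card {e\<in>I. c * s e \<noteq> 0}) \<le> 36 * real m / eps^2" .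
    fix z
    have sc: "(\<Sum>e\<in>I. c * s e * (dot m (v e) z)^2) = c * (\<Sum>e\<in>I. s e * (dot m (v e) z)^2)"
      by (simp add: sum_distrib_left mult_ac)
    have "(1 - eps) * dot m z z = c * (L * dot m z z)" using cl by (simp add: mult_ac)
    also have "\<dots> \<le> c * (\<Sum>e\<in>I. s e * (dot m (v e) z)^2)"
      using s(3) c0 by (intro mult_left_mono) (auto simp: L_def)
    finally show "(1 - eps) * dot m z z \<le> (\<Sum>e\<in>I. c * s e * (dot m (v e) z)^2)" using sc by simp
    have "c * (\<Sum>e\<in>I. s e * (dot m (v e) z)^2) \<le> c * (real m * real r * (real r + 1) * ((real r + 1) / (real r - 1)) * dot m z z)"
      using s(3) c0 by (intro mult_left_mono) auto
    also have "\<dots> = (c * (real m * real r * (real r + 1) * ((real r + 1) / (real r - 1)))) * dot m z z" by simp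
    also have "\<dots> \<le> (1 + eps) * dot m z z" using cu dot_self_ge by (intro mult_right_mono) auto
    finally show "(\<Sum>e\<in>I. c * s e * (dot m (v e) z)^2) \<le> (1 + eps) * dot m z z" using sc by simp
  qed
qed

lemma gs:
  assumes "finite J" "finite (E::'e set)"
  shows "\<exists>m q \<alpha>. m \<le> card J \<and>
     (\<forall>k<m. \<forall>k'<m. (\<Sum>e\<in>E. q k e * q k' e) = (if k = k' then 1 else (0::real))) \<and>
     (\<forall>j\<in>J. \<forall>e\<in>E. c j e = (\<Sum>k<m. \<alpha> j k * q k e))"
  using assms(1)
proof (induction J rule: finite_induct)
  case empty
  show ?case by (intro exI[of _ 0]) auto
next
  case (insert j J)
  then obtain m q \<alpha> where m: "m \<le> card J"
    and on: "\<forall>k<m. \<forall>k'<m. (\<Sum>e\<in>E. q k e * q k' e) = (if k = k' then 1 else (0::real))"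
    and rep: "\<forall>j\<in>J. \<forall>e\<in>E. c j e = (\<Sum>k<m. \<alpha> j k * q k e)" by blast
  define ip where "ip f g = (\<Sum>e\<in>E. f e * g e)" for f g :: "'e \<Rightarrow> real"
  define a where "a k = ip (c j) (q k)" for k
  define r where "r e = c j e - (\<Sum>k<m. a k * q k e)" for e
  have rq: "ip r (q k') = 0" if "k' < m" for k'
  proof -
    have "ip r (q k') = (\<Sum>e\<in>E. c j e * q k' e - (\<Sum>k<m. a k * (q k e * q k' e)))"
      unfolding ip_def[of r] r_def by (intro sum.cong refl) (simp add: right_diff_distrib left_diff_distrib sum_distrib_left sum_distrib_right mult_ac)
    also have "\<dots> = ip (c j) (q k') - (\<Sum>e\<in>E. \<Sum>k<m. a k * (q k e * q k' e))"
      by (simp add: sum_subtractf ip_def)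
    also have "(\<Sum>e\<in>E. \<Sum>k<m. a k * (q k e * q k' e)) = (\<Sum>k<m. \<Sum>e\<in>E. a k * (q k e * q k' e))"
      by (rule sum.swap)
    also have "\<dots> = (\<Sum>k<m. a k * (if k = k' then 1 else 0))"
      using on that by (intro sum.cong refl) (simp add: sum_distrib_left[symmetric])
    also have "\<dots> = a k'" using that by (simp add: sum_delta_r)
    finally show ?thesis by (simp add: a_def)
  qed
  have cj: "c j e = (\<Sum>k<m. a k * q k e) + r e" for e by (simp add: r_def)
  have card_ins: "card (insert j J) = Suc (card J)" using insert by simp
  show ?case
  proof (cases "ip r r = 0")
    case True
    have r0: "r e = 0" if "e \<in> E" for e
    proof -
      have "(\<Sum>e\<in>E. r e * r e) = 0" using True by (simp add: ip_def)
      then have "\<forall>e\<in>E. r e * r e = 0" using assms(2) by (subst (asm) sum_nonneg_eq_0_iff) auto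
      then show ?thesis using that by simp
    qed
    define \<alpha>' where "\<alpha>' = \<alpha>(j := a)"
    show ?thesis
    proof (intro exI[of _ m] exI[of _ q] exI[of _ \<alpha>'] conjI)
      show "m \<le> card (insert j J)" using m card_ins by simp
      show "\<forall>k<m. \<forall>k'<m. (\<Sum>e\<in>E. q k e * q k' e) = (if k = k' then 1 else 0)" by (rule on)
      show "\<forall>i\<in>insert j J. \<forall>e\<in>E. c i e = (\<Sum>k<m. \<alpha>' i k * q k e)"
        using rep r0 cj insert(2) by (auto simp: \<alpha>'_def)
    qed
  next
    case False
    have rr: "0 < ip r r"
    proof -
      have "0 \<le> ip r r" unfolding ip_def by (intro sum_nonneg) simp
      then show ?thesis using False by simp
    qed
    define nr where "nr = sqrt (ip r r)"
    have nr: "0 < nr" "nr * nr = ip r r" using rr by (auto simp: nr_def)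
    define q' where "q' = q(m := (\<lambda>e. r e / nr))"
    define \<alpha>' where "\<alpha>' i k = (if i = j then (if k < m then a k else if k = m then nr else 0)
        else (if k < m then \<alpha> i k else 0))" for i k
    show ?thesis
    proof (intro exI[of _ "Suc m"] exI[of _ q'] exI[of _ \<alpha>'] conjI)
      show "Suc m \<le> card (insert j J)" using m card_ins by simp
      show "\<forall>k<Suc m. \<forall>k'<Suc m. (\<Sum>e\<in>E. q' k e * q' k' e) = (if k = k' then 1 else 0)"
      proof (intro allI impI)
        fix k k' assume k: "k < Suc m" and k': "k' < Suc m"
        have rq': "(\<Sum>e\<in>E. r e / nr * q i e) = 0" if "i < m" for i
        proof -
          have "(\<Sum>e\<in>E. r e / nr * q i e) = ip r (q i) / nr"
            by (simp add: ip_def sum_divide_distrib)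
          then show ?thesis using rq[OF that] by simp
        qed
        have rq'': "(\<Sum>e\<in>E. q i e * (r e / nr)) = 0" if "i < m" for i
          using rq'[OF that] by (simp add: mult.commute)
        have rr': "(\<Sum>e\<in>E. r e / nr * (r e / nr)) = 1"
        proof -
          have "(\<Sum>e\<in>E. r e / nr * (r e / nr)) = ip r r / (nr * nr)"
            by (simp add: ip_def sum_divide_distrib)
          then show ?thesis using nr rr by simp
        qed
        show "(\<Sum>e\<in>E. q' k e * q' k' e) = (if k = k' then 1 else 0)"
        proof (cases "k = m")
          case True
          show ?thesis
          proof (cases "k' = m")
            case True then show ?thesis using \<open>k = m\<close> rr' by (simp add: q'_def)
          next
            case False then show ?thesis using \<open>k = m\<close> k' rq' by (simp add: q'_def)
          qed
        next
          case False
          then have km: "k < m" using k by simp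
          show ?thesis
          proof (cases "k' = m")
            case True then show ?thesis using km rq'' by (simp add: q'_def)
          next
            case False then show ?thesis using km k' on by (simp add: q'_def)
          qed
        qed
      qed
      show "\<forall>i\<in>insert j J. \<forall>e\<in>E. c i e = (\<Sum>k<Suc m. \<alpha>' i k * q' k e)"
      proof (intro ballI)
        fix i e assume i: "i \<in> insert j J" and e: "e \<in> E"
        have s1: "(\<Sum>k<Suc m. \<alpha>' i k * q' k e) = (\<Sum>k<m. \<alpha>' i k * q k e) + \<alpha>' i m * (r e / nr)"
          by (simp add: q'_def)
        show "c i e = (\<Sum>k<Suc m. \<alpha>' i k * q' k e)"
        proof (cases "i = j")
          case True
          have "(\<Sum>k<m. \<alpha>' i k * q k e) = (\<Sum>k<m. a k * q k e)"
            using True by (intro sum.cong refl) (simp add: \<alpha>'_def)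
          then show ?thesis using s1 True cj[of e] nr by (simp add: \<alpha>'_def)
        next
          case False
          then have iJ: "i \<in> J" using i by simp
          have "(\<Sum>k<m. \<alpha>' i k * q k e) = (\<Sum>k<m. \<alpha> i k * q k e)"
            using False by (intro sum.cong refl) (simp add: \<alpha>'_def)
          then show ?thesis using s1 False rep iJ e by (simp add: \<alpha>'_def)
        qed
      qed
    qed
  qed
qed

lemma sparse_quad:
  fixes c :: "'j \<Rightarrow> 'e \<Rightarrow> real"
  assumes J: "finite J" and E: "finite E" and ep: "0 < eps" "eps < 1"
  shows "\<exists>s. (\<forall>e. 0 \<le> s e) \<and> real (card {e\<in>E. s e \<noteq> 0}) \<le> 36 * real (card J) / eps^2 \<and>
     (\<forall>x. (1 - eps) * (\<Sum>e\<in>E. (\<Sum>j\<in>J. c j e * x j)^2) \<le> (\<Sum>e\<in>E. s e * (\<Sum>j\<in>J. c j e * x j)^2) \<and>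
          (\<Sum>e\<in>E. s e * (\<Sum>j\<in>J. c j e * x j)^2) \<le> (1 + eps) * (\<Sum>e\<in>E. (\<Sum>j\<in>J. c j e * x j)^2))"
proof -
  obtain m q \<alpha> where m: "m \<le> card J"
    and on: "\<forall>k<m. \<forall>k'<m. (\<Sum>e\<in>E. q k e * q k' e) = (if k = k' then 1 else (0::real))"
    and rep: "\<forall>j\<in>J. \<forall>e\<in>E. c j e = (\<Sum>k<m. \<alpha> j k * q k e)"
    using gs[OF J E, of c] by blast
  define v where "v e = (\<lambda>k. q k e)" for e
  have iso: "\<And>k l. k < m \<Longrightarrow> l < m \<Longrightarrow> (\<Sum>e\<in>E. v e k * v e l) = (if k = l then 1 else 0)"
    using on by (simp add: v_def)
  obtain s where s: "\<forall>e. 0 \<le> s e" "real (card {e\<in>E. s e \<noteq> 0}) \<le> 36 * real m / eps^2"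
    "\<forall>z. (1 - eps) * dot m z z \<le> (\<Sum>e\<in>E. s e * (dot m (v e) z)^2)
        \<and> (\<Sum>e\<in>E. s e * (dot m (v e) z)^2) \<le> (1 + eps) * dot m z z"
    using bss_eps[OF E iso ep] by blast
  show ?thesis
  proof (intro exI[of _ s] conjI allI)
    show "\<And>e. 0 \<le> s e" using s(1) by simp
    have "36 * real m / eps^2 \<le> 36 * real (card J) / eps^2" using m ep by (simp add: divide_right_mono)
    then show "real (card {e\<in>E. s e \<noteq> 0}) \<le> 36 * real (card J) / eps^2" using s(2) by linarith
    fix x :: "'j \<Rightarrow> real"
    define z where "z k = (\<Sum>j\<in>J. \<alpha> j k * x j)" for k
    have key: "(\<Sum>j\<in>J. c j e * x j) = dot m (v e) z" if "e \<in> E" for e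
    proof -
      have "(\<Sum>j\<in>J. c j e * x j) = (\<Sum>j\<in>J. \<Sum>k<m. \<alpha> j k * q k e * x j)"
        using rep that by (intro sum.cong refl) (simp add: sum_distrib_right)
      also have "\<dots> = (\<Sum>k<m. \<Sum>j\<in>J. \<alpha> j k * q k e * x j)" by (rule sum.swap)
      also have "\<dots> = dot m (v e) z"
        unfolding dot_def v_def z_def by (intro sum.cong refl) (simp add: sum_distrib_left mult_ac)
      finally show ?thesis .
    qed
    have tot: "(\<Sum>e\<in>E. (dot m (v e) z)^2) = dot m z z"
    proof -
      have "(\<Sum>e\<in>E. (dot m (v e) z)^2) = (\<Sum>e\<in>E. qf m (outer m z) (v e))"
        by (intro sum.cong refl) (simp add: qf_outer dot_comm)
      also have "\<dots> = tr m (outer m z)" by (rule iso_sum[OF E iso])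
      finally show ?thesis by (simp add: tr_outer)
    qed
    have F1: "(\<Sum>e\<in>E. (\<Sum>j\<in>J. c j e * x j)^2) = dot m z z"
      using key tot by (metis (no_types, lifting) sum.cong)
    have Fs: "(\<Sum>e\<in>E. s e * (\<Sum>j\<in>J. c j e * x j)^2) = (\<Sum>e\<in>E. s e * (dot m (v e) z)^2)"
      using key by (intro sum.cong refl) simp
    show "(1 - eps) * (\<Sum>e\<in>E. (\<Sum>j\<in>J. c j e * x j)^2) \<le> (\<Sum>e\<in>E. s e * (\<Sum>j\<in>J. c j e * x j)^2)"
      unfolding F1 Fs using s(3) by blast
    show "(\<Sum>e\<in>E. s e * (\<Sum>j\<in>J. c j e * x j)^2) \<le> (1 + eps) * (\<Sum>e\<in>E. (\<Sum>j\<in>J. c j e * x j)^2)"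
      unfolding F1 Fs using s(3) by blast
  qed
qed

definition cutv :: "('v \<times> 'v) set \<Rightarrow> ('v \<times> 'v \<Rightarrow> real) \<Rightarrow> ('v \<Rightarrow> bool) \<Rightarrow> ('v \<Rightarrow> bool) \<Rightarrow> real" where
  "cutv E w f g = (\<Sum>e\<in>E. w e * (if f (fst e) \<noteq> g (snd e) then 1 else 0))"

lemma sum_two_delta:
  assumes "finite J" "p \<in> J" "q \<in> J" "p \<noteq> q"
  shows "(\<Sum>j\<in>J. (a::real) * ((if j = p then 1 else 0) - (if j = q then 1 else 0)) * x j) = a * (x p - x q)"
proof -
  have "(\<Sum>j\<in>J. a * ((if j = p then 1 else 0) - (if j = q then 1 else 0)) * x j)
      = (\<Sum>j\<in>J. (if j = p then a * x j else 0) - (if j = q then a * x j else 0))"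
    by (rule sum.cong) auto
  also have "\<dots> = (\<Sum>j\<in>J. (if j = p then a * x j else 0)) - (\<Sum>j\<in>J. (if j = q then a * x j else 0))"
    by (rule sum_subtractf)
  also have "\<dots> = a * x p - a * x q" using assms by simp
  finally show ?thesis by (simp add: algebra_simps)
qed

lemma cut_sparse:
  fixes V :: "'v set" and E :: "('v \<times> 'v) set"
  assumes V: "finite V" and EV: "E \<subseteq> V \<times> V" and w: "\<forall>e\<in>E. 0 < w e" and ep: "0 < eps" "eps < 1"
  shows "\<exists>E' w'. E' \<subseteq> E \<and> (\<forall>e\<in>E'. 0 < w' e) \<and> real (card E') \<le> 72 * real (card V) / eps^2 \<and>
    (\<forall>f g. (1 - eps) * cutv E w f g \<le> cutv E' w' f g \<and> cutv E' w' f g \<le> (1 + eps) * cutv E w f g)"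
proof -
  define J where "J = V \<times> (UNIV :: bool set)"
  have J: "finite J" using V by (simp add: J_def)
  have cJ: "card J = 2 * card V" using V by (simp add: J_def card_cartesian_product)
  have E: "finite E" using V EV finite_subset by (metis finite_SigmaI)
  define c where "c j e = sqrt (w e) * ((if j = (fst e, True) then 1 else 0) - (if j = (snd e, False) then 1 else 0))"
    for j :: "'v \<times> bool" and e :: "'v \<times> 'v"
  obtain s where s: "\<forall>e. 0 \<le> s e" "real (card {e\<in>E. s e \<noteq> 0}) \<le> 36 * real (card J) / eps^2"
    "\<forall>x. (1 - eps) * (\<Sum>e\<in>E. (\<Sum>j\<in>J. c j e * x j)^2) \<le> (\<Sum>e\<in>E. s e * (\<Sum>j\<in>J. c j e * x j)^2) \<and>
          (\<Sum>e\<in>E. s e * (\<Sum>j\<in>J. c j e * x j)^2) \<le> (1 + eps) * (\<Sum>e\<in>E. (\<Sum>j\<in>J. c j e * x j)^2)"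
    using sparse_quad[OF J E ep, of c] by blast
  define E' where "E' = {e\<in>E. s e \<noteq> 0}"
  define w' where "w' e = s e * w e" for e
  show ?thesis
  proof (intro exI[of _ E'] exI[of _ w'] conjI allI)
    show "E' \<subseteq> E" by (auto simp: E'_def)
    show "\<forall>e\<in>E'. 0 < w' e" using s(1) w by (auto simp: E'_def w'_def intro!: mult_pos_pos order.not_eq_order_implies_strict)
    show "real (card E') \<le> 72 * real (card V) / eps^2" using s(2) cJ by (simp add: E'_def)
    fix f g :: "'v \<Rightarrow> bool"
    define x where "x j = (if snd j then (if f (fst j) then 1 else 0) else (if g (fst j) then 1 else (0::real)))" for j
    have sq: "(\<Sum>j\<in>J. c j e * x j)^2 = w e * (if f (fst e) \<noteq> g (snd e) then 1 else 0)" if "e \<in> E" for e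
    proof -
      have m: "(fst e, True) \<in> J" "(snd e, False) \<in> J" using that EV by (auto simp: J_def)
      have "(\<Sum>j\<in>J. c j e * x j) = sqrt (w e) * (x (fst e, True) - x (snd e, False))"
        unfolding c_def by (rule sum_two_delta[OF J m]) simp
      moreover have "(sqrt (w e))^2 = w e"
      proof -
        have "0 < w e" using w that by blast
        then show ?thesis by simp
      qed
      ultimately show ?thesis by (simp add: x_def power_mult_distrib)
    qed
    have F1: "(\<Sum>e\<in>E. (\<Sum>j\<in>J. c j e * x j)^2) = cutv E w f g"
      unfolding cutv_def by (intro sum.cong refl) (rule sq)
    have Fs: "(\<Sum>e\<in>E. s e * (\<Sum>j\<in>J. c j e * x j)^2) = cutv E' w' f g"
    proof -
      have "(\<Sum>e\<in>E. s e * (\<Sum>j\<in>J. c j e * x j)^2) = (\<Sum>e\<in>E. if s e \<noteq> 0 then w' e * (if f (fst e) \<noteq> g (snd e) then 1 else 0) else 0)"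
        by (intro sum.cong refl) (auto simp: sq w'_def)
      also have "\<dots> = cutv E' w' f g" unfolding cutv_def E'_def by (rule sum.inter_filter[OF E, symmetric])
      finally show ?thesis .
    qed
    have h: "(1 - eps) * (\<Sum>e\<in>E. (\<Sum>j\<in>J. c j e * x j)^2) \<le> (\<Sum>e\<in>E. s e * (\<Sum>j\<in>J. c j e * x j)^2) \<and>
          (\<Sum>e\<in>E. s e * (\<Sum>j\<in>J. c j e * x j)^2) \<le> (1 + eps) * (\<Sum>e\<in>E. (\<Sum>j\<in>J. c j e * x j)^2)"
      using s(3) by blast
    show "(1 - eps) * cutv E w f g \<le> cutv E' w' f g" using h unfolding F1 Fs by blast
    show "cutv E' w' f g \<le> (1 + eps) * cutv E w f g" using h unfolding F1 Fs by blast
  qed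
qed

lemma disj_family:
  assumes nos: "\<not> (\<exists>B C :: 'd set. card B = 2 \<and> card C = 2 \<and> singleton_restr P B C)"
  shows "{y. \<not> P x y} = {y. \<not> P x' y} \<or> {y. \<not> P x y} \<inter> {y. \<not> P x' y} = {}"
proof (rule ccontr)
  assume "\<not> ?thesis"
  then obtain y where y: "\<not> P x y" "\<not> P x' y" and ne: "{y. \<not> P x y} \<noteq> {y. \<not> P x' y}" by auto
  have key: False if h: "\<not> P a y" "\<not> P b y" "\<not> P a z" "P b z" for a b z
  proof -
    have ab: "a \<noteq> b" using h by auto
    have zy: "z \<noteq> y" using h by auto
    have "{(bb, cc). bb \<in> {b, a} \<and> cc \<in> {z, y} \<and> P bb cc} = {(b, z)}" using h by auto
    then have "singleton_restr P {b, a} {z, y}" by (simp add: singleton_restr_def)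
    moreover have "card {b, a} = 2" "card {z, y} = 2" using ab zy by auto
    ultimately show False using nos by blast
  qed
  from ne obtain z where "(\<not> P x z \<and> P x' z) \<or> (\<not> P x' z \<and> P x z)" by auto
  then show False using key y by blast
qed

lemma count_disj:
  assumes "finite F" "\<forall>S1\<in>F. \<forall>S2\<in>F. y \<in> S1 \<longrightarrow> y \<in> S2 \<longrightarrow> S1 = S2"
  shows "(\<Sum>S\<in>F. (if y \<in> S then 1 else 0 :: real)) = (if y \<in> \<Union>F then 1 else 0)"
proof (cases "y \<in> \<Union>F")
  case True
  then obtain S0 where S0: "S0 \<in> F" "y \<in> S0" by auto
  then have eq: "{S\<in>F. y \<in> S} = {S0}" using assms(2) by auto
  have "(\<Sum>S\<in>F. (if y \<in> S then 1 else 0 :: real)) = (\<Sum>S\<in>{S\<in>F. y \<in> S}. 1)"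
    by (rule sum.inter_filter[OF assms(1), symmetric])
  also have "\<dots> = 1" unfolding eq by simp
  finally show ?thesis using True by simp
next
  case False
  then show ?thesis by (auto intro!: sum.neutral)
qed

lemma P_identity:
  fixes P :: "'d::finite \<Rightarrow> 'd \<Rightarrow> bool"
  assumes nos: "\<not> (\<exists>B C :: 'd set. card B = 2 \<and> card C = 2 \<and> singleton_restr P B C)"
  defines "T \<equiv> \<lambda>x. {y. \<not> P x y}"
  defines "F \<equiv> {T x | x. T x \<noteq> {}}"
  shows "2 * (if P x y then 1 else 0::real) = (if T x = {} then 1 else 0) + (if y \<notin> \<Union>F then 1 else 0)
     + (\<Sum>S\<in>F. if (T x = S) \<noteq> (y \<in> S) then 1 else 0)"
proof -
  have finF: "finite F" by (rule finite_subset[of _ UNIV]) auto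
  have uniq: "\<forall>S1\<in>F. \<forall>S2\<in>F. y \<in> S1 \<longrightarrow> y \<in> S2 \<longrightarrow> S1 = S2"
    using disj_family[OF nos] by (auto simp: F_def T_def)
  have Py: "P x y \<longleftrightarrow> y \<notin> T x" by (simp add: T_def)
  show ?thesis
  proof (cases "T x = {}")
    case True
    have "(\<Sum>S\<in>F. (if (T x = S) \<noteq> (y \<in> S) then 1 else 0::real)) = (\<Sum>S\<in>F. if y \<in> S then 1 else 0)"
      using True by (intro sum.cong refl) (auto simp: F_def)
    also have "\<dots> = (if y \<in> \<Union>F then 1 else 0)" by (rule count_disj[OF finF uniq])
    finally show ?thesis using True Py by simp
  next
    case False
    then have TF: "T x \<in> F" by (auto simp: F_def)
    have finF': "finite (F - {T x})" using finF by simp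
    have uniq': "\<forall>S1\<in>F - {T x}. \<forall>S2\<in>F - {T x}. y \<in> S1 \<longrightarrow> y \<in> S2 \<longrightarrow> S1 = S2" using uniq by blast
    define h where "h S = (if (T x = S) \<noteq> (y \<in> S) then 1 else 0::real)" for S
    have "(\<Sum>S\<in>F. h S) = h (T x) + (\<Sum>S\<in>F - {T x}. h S)" by (rule sum.remove[OF finF TF])
    moreover have "h (T x) = (if y \<notin> T x then 1 else 0)" by (simp add: h_def)
    ultimately have "(\<Sum>S\<in>F. (if (T x = S) \<noteq> (y \<in> S) then 1 else 0::real))
        = (if y \<notin> T x then 1 else 0) + (\<Sum>S\<in>F - {T x}. (if (T x = S) \<noteq> (y \<in> S) then 1 else 0))"
      by (simp add: h_def)
    also have "(\<Sum>S\<in>F - {T x}. (if (T x = S) \<noteq> (y \<in> S) then 1 else 0::real)) = (\<Sum>S\<in>F - {T x}. if y \<in> S then 1 else 0)"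
      by (intro sum.cong refl) auto
    also have "\<dots> = (if y \<in> \<Union>(F - {T x}) then 1 else 0)" by (rule count_disj[OF finF' uniq'])
    finally have eq: "(\<Sum>S\<in>F. (if (T x = S) \<noteq> (y \<in> S) then 1 else 0::real))
        = (if y \<notin> T x then 1 else 0) + (if y \<in> \<Union>(F - {T x}) then 1 else 0)" .
    show ?thesis
    proof (cases "y \<in> T x")
      case True
      have "y \<notin> \<Union>(F - {T x})" using uniq TF True by blast
      moreover have "y \<in> \<Union>F" using TF True by blast
      ultimately show ?thesis using eq True False Py by simp
    next
      case nT: False
      have "y \<in> \<Union>(F - {T x}) \<longleftrightarrow> y \<in> \<Union>F" using nT by blast
      then show ?thesis using eq nT False Py by simp
    qed
  qed
qed

lemma val_decomp:
  fixes P :: "'d::finite \<Rightarrow> 'd \<Rightarrow> bool" and A :: "'v \<Rightarrow> 'd"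
  assumes nos: "\<not> (\<exists>B C :: 'd set. card B = 2 \<and> card C = 2 \<and> singleton_restr P B C)"
  defines "T \<equiv> \<lambda>x. {y. \<not> P x y}"
  defines "F \<equiv> {T x | x. T x \<noteq> {}}"
  shows "2 * csp_val P E w A = cutv E w (\<lambda>u. T (A u) = {}) (\<lambda>_. False) + cutv E w (\<lambda>_. False) (\<lambda>v. A v \<notin> \<Union>F)
     + (\<Sum>S\<in>F. cutv E w (\<lambda>u. T (A u) = S) (\<lambda>v. A v \<in> S))"
proof -
  have "2 * csp_val P E w A = (\<Sum>e\<in>E. w e * (2 * (if P (A (fst e)) (A (snd e)) then 1 else 0)))"
    by (simp add: csp_val_def sum_distrib_left mult_ac)
  also have "\<dots> = (\<Sum>e\<in>E. w e * (if (T (A (fst e)) = {}) \<noteq> False then 1 else 0)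
      + w e * (if False \<noteq> (A (snd e) \<notin> \<Union>F) then 1 else 0)
      + (\<Sum>S\<in>F. w e * (if (T (A (fst e)) = S) \<noteq> (A (snd e) \<in> S) then 1 else 0)))"
  proof (intro sum.cong refl)
    fix e
    have pw: "2 * (if P a b then 1 else 0::real) = (if (T a = {}) \<noteq> False then 1 else 0)
      + (if False \<noteq> (b \<notin> \<Union>F) then 1 else 0) + (\<Sum>S\<in>F. if (T a = S) \<noteq> (b \<in> S) then 1 else 0)" for a b
      using P_identity[OF nos, of a b] unfolding T_def F_def by simp
    show "w e * (2 * (if P (A (fst e)) (A (snd e)) then 1 else 0)) = w e * (if (T (A (fst e)) = {}) \<noteq> False then 1 else 0)
      + w e * (if False \<noteq> (A (snd e) \<notin> \<Union>F) then 1 else 0)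
      + (\<Sum>S\<in>F. w e * (if (T (A (fst e)) = S) \<noteq> (A (snd e) \<in> S) then 1 else 0))"
      by (simp only: pw distrib_left sum_distrib_left)
  qed
  also have "\<dots> = cutv E w (\<lambda>u. T (A u) = {}) (\<lambda>_. False) + cutv E w (\<lambda>_. False) (\<lambda>v. A v \<notin> \<Union>F)
     + (\<Sum>e\<in>E. \<Sum>S\<in>F. w e * (if (T (A (fst e)) = S) \<noteq> (A (snd e) \<in> S) then 1 else 0))"
    by (simp add: sum.distrib cutv_def)
  also have "(\<Sum>e\<in>E. \<Sum>S\<in>F. w e * (if (T (A (fst e)) = S) \<noteq> (A (snd e) \<in> S) then 1 else 0))
      = (\<Sum>S\<in>F. cutv E w (\<lambda>u. T (A u) = S) (\<lambda>v. A v \<in> S))"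
    unfolding cutv_def by (rule sum.swap)
  finally show ?thesis .
qed

lemma part2:
  fixes P :: "'d::finite \<Rightarrow> 'd \<Rightarrow> bool"
  assumes nos: "\<not> (\<exists>B C :: 'd set. card B = 2 \<and> card C = 2 \<and> singleton_restr P B C)"
    and ep: "0 < eps" "eps < 1" and inst: "csp_instance (V::'v set) E w"
  shows "\<exists>E' w'. is_sparsifier P eps E w E' w' \<and> real (card E') \<le> 72 * real (card V) / eps^2"
proof -
  have V: "finite V" and EV: "E \<subseteq> V \<times> V" and w: "\<forall>e\<in>E. 0 < w e"
    using inst by (auto simp: csp_instance_def)
  obtain E' w' where E': "E' \<subseteq> E" "\<forall>e\<in>E'. 0 < w' e" "real (card E') \<le> 72 * real (card V) / eps^2"
    and cut: "\<forall>f g. (1 - eps) * cutv E w f g \<le> cutv E' w' f g \<and> cutv E' w' f g \<le> (1 + eps) * cutv E w f g"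
    using cut_sparse[OF V EV w ep] by blast
  define T where "T = (\<lambda>x. {y. \<not> P x y})"
  define F where "F = {T x | x. T x \<noteq> {}}"
  have finF: "finite F" by (rule finite_subset[of _ UNIV]) auto
  have "(1 - eps) * csp_val P E w A \<le> csp_val P E' w' A \<and> csp_val P E' w' A \<le> (1 + eps) * csp_val P E w A"
    for A :: "'v \<Rightarrow> 'd"
  proof -
    define c where "c E0 w0 = cutv E0 w0 (\<lambda>u. T (A u) = {}) (\<lambda>_. False) + cutv E0 w0 (\<lambda>_. False) (\<lambda>v. A v \<notin> \<Union>F)
      + (\<Sum>S\<in>F. cutv E0 w0 (\<lambda>u. T (A u) = S) (\<lambda>v. A v \<in> S))" for E0 w0
    have d1: "2 * csp_val P E w A = c E w" unfolding c_def T_def F_def by (rule val_decomp[OF nos])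
    have d2: "2 * csp_val P E' w' A = c E' w'" unfolding c_def T_def F_def by (rule val_decomp[OF nos])
    have lo: "(1 - eps) * c E w \<le> c E' w'"
    proof -
      have "(1 - eps) * c E w = (1 - eps) * cutv E w (\<lambda>u. T (A u) = {}) (\<lambda>_. False)
        + (1 - eps) * cutv E w (\<lambda>_. False) (\<lambda>v. A v \<notin> \<Union>F)
        + (\<Sum>S\<in>F. (1 - eps) * cutv E w (\<lambda>u. T (A u) = S) (\<lambda>v. A v \<in> S))"
        by (simp add: c_def distrib_left sum_distrib_left)
      also have "\<dots> \<le> c E' w'" unfolding c_def
        using cut by (intro add_mono sum_mono) auto
      finally show ?thesis .
    qed
    have hi: "c E' w' \<le> (1 + eps) * c E w"
    proof -
      have "(1 + eps) * c E w = (1 + eps) * cutv E w (\<lambda>u. T (A u) = {}) (\<lambda>_. False)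
        + (1 + eps) * cutv E w (\<lambda>_. False) (\<lambda>v. A v \<notin> \<Union>F)
        + (\<Sum>S\<in>F. (1 + eps) * cutv E w (\<lambda>u. T (A u) = S) (\<lambda>v. A v \<in> S))"
        by (simp add: c_def distrib_left sum_distrib_left)
      moreover have "c E' w' \<le> (1 + eps) * cutv E w (\<lambda>u. T (A u) = {}) (\<lambda>_. False)
        + (1 + eps) * cutv E w (\<lambda>_. False) (\<lambda>v. A v \<notin> \<Union>F)
        + (\<Sum>S\<in>F. (1 + eps) * cutv E w (\<lambda>u. T (A u) = S) (\<lambda>v. A v \<in> S))" unfolding c_def
        using cut by (intro add_mono sum_mono) auto
      ultimately show ?thesis by simp
    qed
    have a: "(1 - eps) * (2 * csp_val P E w A) \<le> 2 * csp_val P E' w' A" using lo d1 d2 by simp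
    have b: "2 * csp_val P E' w' A \<le> (1 + eps) * (2 * csp_val P E w A)" using hi d1 d2 by simp
    show ?thesis using a b by (simp add: mult.left_commute)
  qed
  then show ?thesis using E' unfolding is_sparsifier_def by blast
qed

lemma part1:
  fixes P :: "'d \<Rightarrow> 'd \<Rightarrow> bool"
  assumes B: "card B = 2" and C: "card C = 2" and sing: "singleton_restr P B C" and ep: "eps < 1"
  shows "\<exists>n\<ge>N. \<exists>(V::nat set) E w. csp_instance V E w \<and> card V = n \<and>
           (\<forall>E' w'. is_sparsifier P eps E w E' w' \<longrightarrow> real (card E') \<ge> 1/4 * (real n)^2)"
proof -
  obtain p where p: "{(b, c). b \<in> B \<and> c \<in> C \<and> P b c} = {p}"
    using sing unfolding singleton_restr_def by (meson card_1_singletonE)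
  obtain b1 c1 where pp: "p = (b1, c1)" by (cases p)
  have b1: "b1 \<in> B" "c1 \<in> C" "P b1 c1" using p pp by blast+
  obtain b2 where b2: "b2 \<in> B" "b2 \<noteq> b1" using B b1(1)
    by (metis card_2_iff insert_iff)
  obtain c2 where c2: "c2 \<in> C" "c2 \<noteq> c1" using C b1(2)
    by (metis card_2_iff insert_iff)
  have uniq: "P b c \<Longrightarrow> b \<in> B \<Longrightarrow> c \<in> C \<Longrightarrow> b = b1 \<and> c = c1" for b c
    using p pp by blast
  define k where "k = Suc N"
  define V where "V = {0..<2*k}"
  define E where "E = {0..<k} \<times> {k..<2*k}"
  define w where "w = (\<lambda>_::nat\<times>nat. 1::real)"
  have finE: "finite E" by (simp add: E_def)
  have inst: "csp_instance V E w" by (auto simp: csp_instance_def V_def E_def w_def)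
  have cV: "card V = 2 * k" by (simp add: V_def)
  have cE: "card E = k * k" by (simp add: E_def card_cartesian_product)
  show ?thesis
  proof (intro exI[of _ "2*k"] conjI exI[of _ V] exI[of _ E] exI[of _ w] allI impI)
    show "N \<le> 2 * k" by (simp add: k_def)
    show "csp_instance V E w" by (rule inst)
    show "card V = 2 * k" by (rule cV)
    fix E' w' assume sp: "is_sparsifier P eps E w E' w'"
    have E'E: "E' \<subseteq> E" using sp by (simp add: is_sparsifier_def)
    have "E \<subseteq> E'"
    proof
      fix e assume eE: "e \<in> E"
      obtain i j where ij: "e = (i, j)" by (cases e)
      have i: "i < k" and j: "k \<le> j" "j < 2*k" using eE ij by (auto simp: E_def)
      define A where "A z = (if z = i then b1 else if z < k then b2 else if z = j then c1 else c2)" for z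
      have PA: "P (A (fst e')) (A (snd e')) \<longleftrightarrow> e' = e" if "e' \<in> E" for e'
      proof -
        obtain a b where ab: "e' = (a, b)" by (cases e')
        have a: "a < k" and b: "k \<le> b" using that ab by (auto simp: E_def)
        have AB: "A a \<in> B" "A b \<in> C" using a b i b1 b2 c2 by (auto simp: A_def)
        have "P (A a) (A b) \<longleftrightarrow> A a = b1 \<and> A b = c1" using uniq[OF _ AB] b1(3) by blast
        also have "\<dots> \<longleftrightarrow> a = i \<and> b = j" using a b i j b2 c2 by (auto simp: A_def)
        finally show ?thesis using ab ij by simp
      qed
      have v1: "csp_val P E w A = 1"
      proof -
        have "csp_val P E w A = (\<Sum>e'\<in>E. if e' = e then 1 else 0)"
          unfolding csp_val_def w_def by (intro sum.cong refl) (simp add: PA)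
        also have "\<dots> = 1" using eE finE by simp
        finally show ?thesis .
      qed
      show "e \<in> E'"
      proof (rule ccontr)
        assume "e \<notin> E'"
        have "csp_val P E' w' A = (\<Sum>e'\<in>E'. 0)"
          unfolding csp_val_def using E'E \<open>e \<notin> E'\<close> PA by (intro sum.cong refl) auto
        then have "csp_val P E' w' A = 0" by simp
        moreover have "(1 - eps) * csp_val P E w A \<le> csp_val P E' w' A" using sp by (simp add: is_sparsifier_def)
        ultimately show False using v1 ep by simp
      qed
    qed
    then have "E' = E" using E'E by blast
    then have "real (card E') = real k * real k" using cE by simp
    also have "\<dots> = 1/4 * (real (2*k))^2" by (simp add: power2_eq_square)
    finally show "real (card E') \<ge> 1/4 * (real (2*k))^2" by simp
  qed
qed

theorem theorem2:
  fixes P :: "'d::finite \<Rightarrow> 'd \<Rightarrow> bool"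
  assumes "card (UNIV :: 'd set) \<ge> 2"
  shows "((\<exists>B C :: 'd set. card B = 2 \<and> card C = 2 \<and> singleton_restr P B C) \<longrightarrow>
           (\<forall>eps::real. 0 < eps \<and> eps < 1 \<longrightarrow>
              (\<exists>c::real. c > 0 \<and> (\<forall>N::nat. \<exists>n\<ge>N. \<exists>(V::nat set) E w.
                  csp_instance V E w \<and> card V = n \<and>
                  (\<forall>E' w'. is_sparsifier P eps E w E' w' \<longrightarrow> real (card E') \<ge> c * (real n)^2)))))
       \<and> ((\<not> (\<exists>B C :: 'd set. card B = 2 \<and> card C = 2 \<and> singleton_restr P B C)) \<longrightarrow>
           (\<exists>K::real. K > 0 \<and> (\<forall>eps::real. 0 < eps \<and> eps < 1 \<longrightarrow>
              (\<forall>(V::'v set) E w. csp_instance V E w \<longrightarrow>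
                 (\<exists>E' w'. is_sparsifier P eps E w E' w' \<and>
                    real (card E') \<le> K * real (card V) / eps^2)))))"
proof (intro conjI impI)
  assume "\<exists>B C :: 'd set. card B = 2 \<and> card C = 2 \<and> singleton_restr P B C"
  then obtain B C :: "'d set" where BC: "card B = 2" "card C = 2" "singleton_restr P B C" by blast
  show "\<forall>eps::real. 0 < eps \<and> eps < 1 \<longrightarrow>
              (\<exists>c::real. c > 0 \<and> (\<forall>N::nat. \<exists>n\<ge>N. \<exists>(V::nat set) E w.
                  csp_instance V E w \<and> card V = n \<and>
                  (\<forall>E' w'. is_sparsifier P eps E w E' w' \<longrightarrow> real (card E') \<ge> c * (real n)^2)))"
  proof (intro allI impI)
    fix eps :: real assume "0 < eps \<and> eps < 1"
    then show "\<exists>c::real. c > 0 \<and> (\<forall>N::nat. \<exists>n\<ge>N. \<exists>(V::nat set) E w.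
                  csp_instance V E w \<and> card V = n \<and>
                  (\<forall>E' w'. is_sparsifier P eps E w E' w' \<longrightarrow> real (card E') \<ge> c * (real n)^2))"
      using part1[OF BC] by (intro exI[of _ "1/4"]) auto
  qed
next
  assume nos: "\<not> (\<exists>B C :: 'd set. card B = 2 \<and> card C = 2 \<and> singleton_restr P B C)"
  show "\<exists>K::real. K > 0 \<and> (\<forall>eps::real. 0 < eps \<and> eps < 1 \<longrightarrow>
              (\<forall>(V::'v set) E w. csp_instance V E w \<longrightarrow>
                 (\<exists>E' w'. is_sparsifier P eps E w E' w' \<and>
                    real (card E') \<le> K * real (card V) / eps^2)))"
    using part2[OF nos] by (intro exI[of _ 72]) auto
qed

end
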